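(* Let $G$ be a finitely generated group and $H$ a subgroup of finite index in $G$, and let $f\in\mathfrak{F}$. If $H\in\mathcal{B}_f$, then $G\in\mathcal{B}_f$.
   Context: $\mathfrak{F}$ is the set of nondecreasing functions from some interval $[Q,\infty)\cap\mathbb{N}$ to the nonnegative reals; $g\preceq f$ means there exist $N\ge0$ and positive integers $K,M$ with $g(n)\le Kf(Mn)$ for all $n\ge N$. For a group $G$ with finite generating set $A$, $S=A\cup A^{-1}$, $\pi:S^*\to G$ the evaluation map and $d_A$ the word metric: a Cayley automatic representation is a bijection $\psi:L\to G$ from a regular $L\subseteq S^*$ such that for each $a\in A$ the relation $\{(\psi^{-1}(g),\psi^{-1}(ga)) : g\in G\}$ is FA-recognizable (i.e., the language of convolutions — parallel readings of the two strings with the shorter padded by a new symbol — is regular). Its function is $h(n)=\max\{d_A(\pi(w),\psi(w)): w\in L,|w|\le n\}$, and $G\in\mathcal{B}_f$ means some Cayley automatic representation (for some finite generating set; this is independent of the choice) has $h\preceq f$. *)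

theory Defs
  imports "HOL-Algebra.Algebra"
begin

definition regular_on :: "'s set \<Rightarrow> 's list set \<Rightarrow> bool" where
  "regular_on \<Sigma>A L \<longleftrightarrow> finite \<Sigma>A \<and> L \<subseteq> lists \<Sigma>A \<and>
     (\<exists>(Q::nat set) q0 (\<delta>::nat \<Rightarrow> 's \<Rightarrow> nat) F.
        finite Q \<and> q0 \<in> Q \<and> (\<forall>q\<in>Q. \<forall>x\<in>\<Sigma>A. \<delta> q x \<in> Q) \<and> F \<subseteq> Q \<and>
        L = {w \<in> lists \<Sigma>A. fold (\<lambda>x q. \<delta> q x) w q0 \<in> F})"

text \<open>Padding symbol is None.\<close>
definition conv :: "'s list \<Rightarrow> 's list \<Rightarrow> ('s option \<times> 's option) list" where
  "conv u v = map (\<lambda>i. (if i < length u then Some (u ! i) else None,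
                         if i < length v then Some (v ! i) else None))
                 [0..<max (length u) (length v)]"

definition conv_alphabet :: "'s set \<Rightarrow> ('s option \<times> 's option) set" where
  "conv_alphabet S = (insert None (Some ` S) \<times> insert None (Some ` S)) - {(None, None)}"

definition FA_recognizable :: "'s set \<Rightarrow> ('s list \<times> 's list) set \<Rightarrow> bool" where
  "FA_recognizable S R \<longleftrightarrow> regular_on (conv_alphabet S) {conv u v | u v. (u, v) \<in> R}"

definition fin_gen :: "('a, 'b) monoid_scheme \<Rightarrow> bool" where
  "fin_gen G \<longleftrightarrow> (\<exists>A. finite A \<and> A \<subseteq> carrier G \<and> generate G A = carrier G)"

definition symgens :: "('a, 'b) monoid_scheme \<Rightarrow> 'a set \<Rightarrow> 'a set" where
  "symgens G A = A \<union> (\<lambda>a. inv\<^bsub>G\<^esub> a) ` A"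

definition evalw :: "('a, 'b) monoid_scheme \<Rightarrow> 'a list \<Rightarrow> 'a" where
  "evalw G w = foldr (\<lambda>x acc. x \<otimes>\<^bsub>G\<^esub> acc) w \<one>\<^bsub>G\<^esub>"

definition word_length :: "('a, 'b) monoid_scheme \<Rightarrow> 'a set \<Rightarrow> 'a \<Rightarrow> nat" where
  "word_length G A g = (LEAST n. \<exists>w \<in> lists (symgens G A). length w = n \<and> evalw G w = g)"

definition word_dist :: "('a, 'b) monoid_scheme \<Rightarrow> 'a set \<Rightarrow> 'a \<Rightarrow> 'a \<Rightarrow> nat" where
  "word_dist G A x y = word_length G A (inv\<^bsub>G\<^esub> x \<otimes>\<^bsub>G\<^esub> y)"

definition cayley_aut_rep ::
  "('a, 'b) monoid_scheme \<Rightarrow> 'a set \<Rightarrow> 'a list set \<Rightarrow> ('a list \<Rightarrow> 'a) \<Rightarrow> bool" where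
  "cayley_aut_rep G A L \<psi> \<longleftrightarrow>
     regular_on (symgens G A) L \<and> bij_betw \<psi> L (carrier G) \<and>
     (\<forall>a\<in>A. FA_recognizable (symgens G A)
         {(u, v). u \<in> L \<and> v \<in> L \<and> \<psi> v = \<psi> u \<otimes>\<^bsub>G\<^esub> a})"

definition rep_fun ::
  "('a, 'b) monoid_scheme \<Rightarrow> 'a set \<Rightarrow> 'a list set \<Rightarrow> ('a list \<Rightarrow> 'a) \<Rightarrow> nat \<Rightarrow> real" where
  "rep_fun G A L \<psi> n =
     (if {w \<in> L. length w \<le> n} = {} then 0
      else real (Max ((\<lambda>w. word_dist G A (evalw G w) (\<psi> w)) ` {w \<in> L. length w \<le> n})))"

definition in_frakF :: "(nat \<Rightarrow> real) \<Rightarrow> bool" where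
  "in_frakF f \<longleftrightarrow> (\<exists>Q::nat. (\<forall>m n. Q \<le> m \<longrightarrow> m \<le> n \<longrightarrow> f m \<le> f n) \<and> (\<forall>n\<ge>Q. 0 \<le> f n))"

definition fprec :: "(nat \<Rightarrow> real) \<Rightarrow> (nat \<Rightarrow> real) \<Rightarrow> bool" where
  "fprec g f \<longleftrightarrow> (\<exists>(N::nat) (K::nat) (M::nat). 0 < K \<and> 0 < M \<and>
      (\<forall>n\<ge>N. g n \<le> real K * f (M * n)))"

definition in_B :: "('a, 'b) monoid_scheme \<Rightarrow> (nat \<Rightarrow> real) \<Rightarrow> bool" where
  "in_B G f \<longleftrightarrow> (\<exists>A L \<psi>. finite A \<and> A \<subseteq> carrier G \<and> generate G A = carrier G \<and>
      cayley_aut_rep G A L \<psi> \<and> fprec (rep_fun G A L \<psi>) f)"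

end

theory Submission
  imports Defs
begin

definition dfa_lang :: "'s set \<Rightarrow> ('q \<Rightarrow> 's \<Rightarrow> 'q) \<Rightarrow> 'q \<Rightarrow> 'q set \<Rightarrow> 's list set" where
  "dfa_lang \<Sigma> \<delta> q0 F = {w \<in> lists \<Sigma>. fold (\<lambda>x q. \<delta> q x) w q0 \<in> F}"

lemma fold_closed:
  assumes "\<forall>q\<in>Q. \<forall>x\<in>\<Sigma>. \<delta> q x \<in> Q" "q \<in> Q" "w \<in> lists \<Sigma>"
  shows "fold (\<lambda>x q. \<delta> q x) w q \<in> Q"
  using assms(2,3) by (induction w arbitrary: q) (use assms(1) in auto)

lemma dfa_regular:
  fixes Q :: "'q set"
  assumes "finite \<Sigma>" "finite Q" "q0 \<in> Q" "\<forall>q\<in>Q. \<forall>x\<in>\<Sigma>. \<delta> q x \<in> Q"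
  shows "regular_on \<Sigma> (dfa_lang \<Sigma> \<delta> q0 F)"
proof -
  obtain e :: "'q \<Rightarrow> nat" where e: "inj_on e Q"
    using finite_imp_inj_to_nat_seg[OF assms(2)] by blast
  define \<delta>' where "\<delta>' n x = e (\<delta> (inv_into Q e n) x)" for n x
  have key: "fold (\<lambda>x q. \<delta>' q x) w (e q) = e (fold (\<lambda>x q. \<delta> q x) w q)"
    if "q \<in> Q" "w \<in> lists \<Sigma>" for w q
    using that
  proof (induction w arbitrary: q)
    case Nil then show ?case by simp
  next
    case (Cons x w)
    then have "\<delta> q x \<in> Q" using assms(4) by auto
    moreover have "\<delta>' (e q) x = e (\<delta> q x)" using Cons e by (simp add: \<delta>'_def)
    ultimately show ?case using Cons by simp
  qed
  show ?thesis
    unfolding regular_on_def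
  proof (intro conjI exI)
    show "finite \<Sigma>" by fact
    show "dfa_lang \<Sigma> \<delta> q0 F \<subseteq> lists \<Sigma>" by (auto simp: dfa_lang_def)
    show "finite (e ` Q)" using assms(2) by simp
    show "e q0 \<in> e ` Q" using assms(3) by simp
    show "\<forall>q\<in>e ` Q. \<forall>x\<in>\<Sigma>. \<delta>' q x \<in> e ` Q" using assms(4) e by (auto simp: \<delta>'_def)
    show "e ` (F \<inter> Q) \<subseteq> e ` Q" by auto
    show "dfa_lang \<Sigma> \<delta> q0 F = {w \<in> lists \<Sigma>. fold (\<lambda>x q. \<delta>' q x) w (e q0) \<in> e ` (F \<inter> Q)}"
    proof (rule equalityI; rule subsetI)
      fix w assume "w \<in> dfa_lang \<Sigma> \<delta> q0 F"
      then show "w \<in> {w \<in> lists \<Sigma>. fold (\<lambda>x q. \<delta>' q x) w (e q0) \<in> e ` (F \<inter> Q)}"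
        using key[OF assms(3)] fold_closed[OF assms(4,3)] by (auto simp: dfa_lang_def)
    next
      fix w assume w: "w \<in> {w \<in> lists \<Sigma>. fold (\<lambda>x q. \<delta>' q x) w (e q0) \<in> e ` (F \<inter> Q)}"
      moreover have "fold (\<lambda>x q. \<delta>' q x) w (e q0) = e (fold (\<lambda>x q. \<delta> q x) w q0)"
        using key[OF assms(3)] w by blast
      ultimately have "e (fold (\<lambda>x q. \<delta> q x) w q0) \<in> e ` (F \<inter> Q)" by simp
      moreover have "fold (\<lambda>x q. \<delta> q x) w q0 \<in> Q" using fold_closed[OF assms(4,3)] w by auto
      ultimately have "fold (\<lambda>x q. \<delta> q x) w q0 \<in> F" using e by (auto dest: inj_onD)
      then show "w \<in> dfa_lang \<Sigma> \<delta> q0 F" using w by (auto simp: dfa_lang_def)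
    qed
  qed
qed

lemma regular_dfa:
  assumes "regular_on \<Sigma> L"
  obtains Q :: "nat set" and q0 \<delta> F where "finite \<Sigma>" "finite Q" "q0 \<in> Q" "\<forall>q\<in>Q. \<forall>x\<in>\<Sigma>. \<delta> q x \<in> Q"
    "L = dfa_lang \<Sigma> \<delta> q0 F"
  using assms unfolding regular_on_def dfa_lang_def by blast

inductive nrun :: "('q \<times> 's \<times> 'q) set \<Rightarrow> 'q \<Rightarrow> 's list \<Rightarrow> 'q \<Rightarrow> bool" for \<Delta> where
  nil: "nrun \<Delta> q [] q"
| cons: "(q, x, q1) \<in> \<Delta> \<Longrightarrow> nrun \<Delta> q1 w q' \<Longrightarrow> nrun \<Delta> q (x # w) q'"

lemma nrun_Nil[simp]: "nrun \<Delta> q [] q' \<longleftrightarrow> q' = q"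
  by (auto elim: nrun.cases intro: nrun.nil)

lemma nrun_Cons[simp]: "nrun \<Delta> q (x # w) q' \<longleftrightarrow> (\<exists>q1. (q, x, q1) \<in> \<Delta> \<and> nrun \<Delta> q1 w q')"
  by (auto elim: nrun.cases intro: nrun.cons)

definition nfa_lang :: "'s set \<Rightarrow> ('q \<times> 's \<times> 'q) set \<Rightarrow> 'q set \<Rightarrow> 'q set \<Rightarrow> 's list set" where
  "nfa_lang \<Sigma> \<Delta> I F = {w \<in> lists \<Sigma>. \<exists>q\<in>I. \<exists>q'\<in>F. nrun \<Delta> q w q'}"

lemma nfa_regular:
  fixes Q :: "'q set"
  assumes "finite \<Sigma>" "finite Q" "I \<subseteq> Q" "\<forall>p x q. (p, x, q) \<in> \<Delta> \<longrightarrow> p \<in> Q \<longrightarrow> x \<in> \<Sigma> \<longrightarrow> q \<in> Q"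
  shows "regular_on \<Sigma> (nfa_lang \<Sigma> \<Delta> I F)"
proof -
  define \<delta> where "\<delta> P x = {q' \<in> Q. \<exists>q\<in>P. (q, x, q') \<in> \<Delta>}" for P x
  have key: "fold (\<lambda>x P. \<delta> P x) w P = {q' \<in> Q. \<exists>q\<in>P. nrun \<Delta> q w q'}"
    if "P \<subseteq> Q" "w \<in> lists \<Sigma>" for w P
    using that
  proof (induction w arbitrary: P)
    case Nil then show ?case by auto
  next
    case (Cons x w)
    have "\<delta> P x \<subseteq> Q" by (auto simp: \<delta>_def)
    then have "fold (\<lambda>x P. \<delta> P x) (x # w) P = {q' \<in> Q. \<exists>q\<in>\<delta> P x. nrun \<Delta> q w q'}"
      using Cons by simp
    also have "\<dots> = {q' \<in> Q. \<exists>q\<in>P. nrun \<Delta> q (x # w) q'}"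
      using Cons.prems assms(4) by (auto simp: \<delta>_def; blast)
    finally show ?case .
  qed
  have run_closed: "q' \<in> Q" if "nrun \<Delta> q w q'" "q \<in> Q" "w \<in> lists \<Sigma>" for q w q'
    using that by (induction rule: nrun.induct) (use assms(4) in auto)
  have "regular_on \<Sigma> (dfa_lang \<Sigma> \<delta> I {P. P \<inter> F \<noteq> {}})"
    by (rule dfa_regular[where Q = "Pow Q"]) (use assms in \<open>auto simp: \<delta>_def\<close>)
  moreover have "dfa_lang \<Sigma> \<delta> I {P. P \<inter> F \<noteq> {}} = nfa_lang \<Sigma> \<Delta> I F"
    unfolding dfa_lang_def nfa_lang_def using key[OF assms(3)] run_closed assms(3)
    by (auto; blast)
  ultimately show ?thesis by simp
qed

lemma regular_subset: "regular_on \<Sigma> L \<Longrightarrow> L \<subseteq> lists \<Sigma>"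
  by (simp add: regular_on_def)

lemma regular_enlarge:
  assumes "regular_on \<Sigma> L" "\<Sigma> \<subseteq> \<Sigma>'" "finite \<Sigma>'"
  shows "regular_on \<Sigma>' L"
proof -
  obtain Q :: "nat set" and q0 \<delta> F where D: "finite \<Sigma>" "finite Q" "q0 \<in> Q" "\<forall>q\<in>Q. \<forall>x\<in>\<Sigma>. \<delta> q x \<in> Q"
    "L = dfa_lang \<Sigma> \<delta> q0 F" using regular_dfa[OF assms(1)] by blast
  define \<delta>' where "\<delta>' q x = (case q of None \<Rightarrow> None | Some p \<Rightarrow> if x \<in> \<Sigma> then Some (\<delta> p x) else None)" for q x
  have key: "fold (\<lambda>x q. \<delta>' q x) w (Some q) = (if w \<in> lists \<Sigma> then Some (fold (\<lambda>x q. \<delta> q x) w q) else None)"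
    for w q
  proof (induction w arbitrary: q)
    case Nil then show ?case by simp
  next
    case (Cons x w)
    have n: "fold (\<lambda>x q. \<delta>' q x) w None = None" for w by (induction w) (auto simp: \<delta>'_def)
    show ?case using Cons n by (auto simp: \<delta>'_def)
  qed
  have "regular_on \<Sigma>' (dfa_lang \<Sigma>' \<delta>' (Some q0) (Some ` F))"
    by (rule dfa_regular[where Q = "insert None (Some ` Q)"]) (use assms D in \<open>auto simp: \<delta>'_def\<close>)
  moreover have "dfa_lang \<Sigma>' \<delta>' (Some q0) (Some ` F) = L"
    using D(5) assms(2) by (auto simp: dfa_lang_def key)
  ultimately show ?thesis by simp
qed

lemma regular_restrict:
  assumes "regular_on \<Sigma>' L" "\<Sigma> \<subseteq> \<Sigma>'"
  shows "regular_on \<Sigma> (L \<inter> lists \<Sigma>)"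
proof -
  obtain Q :: "nat set" and q0 \<delta> F where D: "finite \<Sigma>'" "finite Q" "q0 \<in> Q" "\<forall>q\<in>Q. \<forall>x\<in>\<Sigma>'. \<delta> q x \<in> Q"
    "L = dfa_lang \<Sigma>' \<delta> q0 F" using regular_dfa[OF assms(1)] by blast
  have "regular_on \<Sigma> (dfa_lang \<Sigma> \<delta> q0 F)"
    by (rule dfa_regular[where Q = Q]) (use assms D finite_subset in auto)
  moreover have "dfa_lang \<Sigma> \<delta> q0 F = L \<inter> lists \<Sigma>"
    using D(5) assms(2) by (auto simp: dfa_lang_def)
  ultimately show ?thesis by simp
qed

lemma fold_pair:
  "fold (\<lambda>x (p, q). (\<delta>1 p x, \<delta>2 q x)) w (p, q) = (fold (\<lambda>x p. \<delta>1 p x) w p, fold (\<lambda>x q. \<delta>2 q x) w q)"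
  by (induction w arbitrary: p q) auto

lemma regular_binop:
  assumes "regular_on \<Sigma> L1" "regular_on \<Sigma> L2"
  shows "regular_on \<Sigma> {w \<in> lists \<Sigma>. P (w \<in> L1) (w \<in> L2)}"
proof -
  obtain Q1 :: "nat set" and q1 \<delta>1 F1 where D1: "finite \<Sigma>" "finite Q1" "q1 \<in> Q1" "\<forall>q\<in>Q1. \<forall>x\<in>\<Sigma>. \<delta>1 q x \<in> Q1"
    "L1 = dfa_lang \<Sigma> \<delta>1 q1 F1" using regular_dfa[OF assms(1)] by blast
  obtain Q2 :: "nat set" and q2 \<delta>2 F2 where D2: "finite \<Sigma>" "finite Q2" "q2 \<in> Q2" "\<forall>q\<in>Q2. \<forall>x\<in>\<Sigma>. \<delta>2 q x \<in> Q2"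
    "L2 = dfa_lang \<Sigma> \<delta>2 q2 F2" using regular_dfa[OF assms(2)] by blast
  define \<delta> where "\<delta> = (\<lambda>(p, q) x. (\<delta>1 p x, \<delta>2 q x))"
  have f: "fold (\<lambda>x q. \<delta> q x) w (p, q) = (fold (\<lambda>x p. \<delta>1 p x) w p, fold (\<lambda>x q. \<delta>2 q x) w q)" for w p q
    unfolding \<delta>_def using fold_pair[of \<delta>1 \<delta>2 w p q] by (simp add: case_prod_unfold)
  have "regular_on \<Sigma> (dfa_lang \<Sigma> \<delta> (q1, q2) {(p, q). P (p \<in> F1) (q \<in> F2)})"
    by (rule dfa_regular[where Q = "Q1 \<times> Q2"]) (use D1 D2 in \<open>auto simp: \<delta>_def\<close>)
  moreover have "dfa_lang \<Sigma> \<delta> (q1, q2) {(p, q). P (p \<in> F1) (q \<in> F2)} = {w \<in> lists \<Sigma>. P (w \<in> L1) (w \<in> L2)}"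
  proof -
    have "w \<in> dfa_lang \<Sigma> \<delta> (q1, q2) {(p, q). P (p \<in> F1) (q \<in> F2)} \<longleftrightarrow> w \<in> {w \<in> lists \<Sigma>. P (w \<in> L1) (w \<in> L2)}" for w
    proof (cases "w \<in> lists \<Sigma>")
      case True
      then have e1: "(w \<in> L1) = (fold (\<lambda>x p. \<delta>1 p x) w q1 \<in> F1)" and e2: "(w \<in> L2) = (fold (\<lambda>x p. \<delta>2 p x) w q2 \<in> F2)"
        using D1(5) D2(5) by (simp_all add: dfa_lang_def)
      show ?thesis using True by (simp only: dfa_lang_def f e1 e2 mem_Collect_eq split simp_thms)
    next
      case False then show ?thesis by (simp add: dfa_lang_def)
    qed
    then show ?thesis by blast
  qed
  ultimately show ?thesis by simp
qed

lemma regular_Int: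
  assumes "regular_on \<Sigma> L1" "regular_on \<Sigma> L2"
  shows "regular_on \<Sigma> (L1 \<inter> L2)"
proof -
  have "L1 \<inter> L2 = {w \<in> lists \<Sigma>. (w \<in> L1) \<and> (w \<in> L2)}" using regular_subset[OF assms(1)] by auto
  then show ?thesis using regular_binop[OF assms, of "(\<and>)"] by simp
qed

lemma regular_Un:
  assumes "regular_on \<Sigma> L1" "regular_on \<Sigma> L2"
  shows "regular_on \<Sigma> (L1 \<union> L2)"
proof -
  have "L1 \<union> L2 = {w \<in> lists \<Sigma>. (w \<in> L1) \<or> (w \<in> L2)}"
    using regular_subset[OF assms(1)] regular_subset[OF assms(2)] by auto
  then show ?thesis using regular_binop[OF assms, of "(\<or>)"] by simp
qed

lemma regular_empty:
  assumes "finite \<Sigma>" shows "regular_on \<Sigma> {}"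
proof -
  have "regular_on \<Sigma> (dfa_lang \<Sigma> (\<lambda>q x. q) (0::nat) {})"
    by (rule dfa_regular[where Q = "{0}"]) (use assms in auto)
  then show ?thesis by (simp add: dfa_lang_def)
qed

lemma regular_UN:
  assumes "finite I" "finite \<Sigma>" "\<And>i. i \<in> I \<Longrightarrow> regular_on \<Sigma> (L i)"
  shows "regular_on \<Sigma> (\<Union>i\<in>I. L i)"
  using assms by (induction I rule: finite_induct) (auto intro: regular_Un regular_empty)

lemma regular_invhom:
  assumes "regular_on \<Sigma> L" "\<forall>x\<in>\<Sigma>'. h x \<in> \<Sigma>" "finite \<Sigma>'"
  shows "regular_on \<Sigma>' {w \<in> lists \<Sigma>'. map h w \<in> L}"
proof -
  obtain Q :: "nat set" and q0 \<delta> F where D: "finite \<Sigma>" "finite Q" "q0 \<in> Q" "\<forall>q\<in>Q. \<forall>x\<in>\<Sigma>. \<delta> q x \<in> Q"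
    "L = dfa_lang \<Sigma> \<delta> q0 F" using regular_dfa[OF assms(1)] by blast
  have "regular_on \<Sigma>' (dfa_lang \<Sigma>' (\<lambda>q x. \<delta> q (h x)) q0 F)"
    by (rule dfa_regular[where Q = Q]) (use assms D in auto)
  moreover have "dfa_lang \<Sigma>' (\<lambda>q x. \<delta> q (h x)) q0 F = {w \<in> lists \<Sigma>'. map h w \<in> L}"
    using D(5) assms(2) by (auto simp: dfa_lang_def fold_map comp_def)
  ultimately show ?thesis by simp
qed

lemma regular_hom:
  assumes "regular_on \<Sigma> L" "h ` \<Sigma> \<subseteq> \<Sigma>'" "finite \<Sigma>'"
  shows "regular_on \<Sigma>' (map h ` L)"
proof -
  obtain Q :: "nat set" and q0 \<delta> F where D: "finite \<Sigma>" "finite Q" "q0 \<in> Q" "\<forall>q\<in>Q. \<forall>x\<in>\<Sigma>. \<delta> q x \<in> Q"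
    "L = dfa_lang \<Sigma> \<delta> q0 F" using regular_dfa[OF assms(1)] by blast
  define \<Delta> where "\<Delta> = {(q, h x, \<delta> q x) | q x. q \<in> Q \<and> x \<in> \<Sigma>}"
  have run: "nrun \<Delta> q s q' \<longleftrightarrow> (\<exists>w\<in>lists \<Sigma>. map h w = s \<and> fold (\<lambda>x q. \<delta> q x) w q = q')"
    if "q \<in> Q" for q s q'
    using that
  proof (induction s arbitrary: q)
    case Nil then show ?case by auto
  next
    case (Cons y s)
    show ?case
    proof
      assume "nrun \<Delta> q (y # s) q'"
      then obtain q1 where "(q, y, q1) \<in> \<Delta>" "nrun \<Delta> q1 s q'" by auto
      moreover from \<open>(q, y, q1) \<in> \<Delta>\<close> obtain x where "x \<in> \<Sigma>" "h x = y" "q1 = \<delta> q x"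
        by (auto simp: \<Delta>_def)
      ultimately have x: "x \<in> \<Sigma>" "h x = y" "nrun \<Delta> (\<delta> q x) s q'" by auto
      have "\<delta> q x \<in> Q" using x(1) Cons.prems D(4) by blast
      then obtain w where "w \<in> lists \<Sigma>" "map h w = s" "fold (\<lambda>x q. \<delta> q x) w (\<delta> q x) = q'"
        using Cons.IH[of "\<delta> q x"] x by blast
      then show "\<exists>w\<in>lists \<Sigma>. map h w = y # s \<and> fold (\<lambda>x q. \<delta> q x) w q = q'"
        using x by (intro bexI[of _ "x # w"]) auto
    next
      assume "\<exists>w\<in>lists \<Sigma>. map h w = y # s \<and> fold (\<lambda>x q. \<delta> q x) w q = q'"
      then obtain w0 where w0in: "w0 \<in> lists \<Sigma>" and w0p: "map h w0 = y # s \<and> fold (\<lambda>x q. \<delta> q x) w0 q = q'"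
        by (rule bexE)
      have w0: "w0 \<in> lists \<Sigma>" "map h w0 = y # s" "fold (\<lambda>x q. \<delta> q x) w0 q = q'"
        using w0in w0p by simp_all
      then obtain x w where "w0 = x # w" by (cases w0) auto
      then have xw: "x \<in> \<Sigma>" "w \<in> lists \<Sigma>" "h x = y" "map h w = s" "fold (\<lambda>x q. \<delta> q x) w (\<delta> q x) = q'"
        using w0 by auto
      have "\<delta> q x \<in> Q" using xw(1) Cons.prems D(4) by blast
      then have "nrun \<Delta> (\<delta> q x) s q'" using Cons.IH[of "\<delta> q x"] xw by blast
      moreover have "(q, h x, \<delta> q x) \<in> \<Delta>" using xw(1) Cons.prems unfolding \<Delta>_def by blast
      moreover note xw(3)
      ultimately show "nrun \<Delta> q (y # s) q'" using nrun.cons by metis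
    qed
  qed
  have "regular_on \<Sigma>' (nfa_lang \<Sigma>' \<Delta> {q0} F)"
    by (rule nfa_regular[where Q = Q]) (use assms D in \<open>auto simp: \<Delta>_def\<close>)
  moreover have "nfa_lang \<Sigma>' \<Delta> {q0} F = map h ` L"
  proof -
    have "map h ` L \<subseteq> lists \<Sigma>'"
    proof
      fix s assume "s \<in> map h ` L"
      then obtain w where w: "w \<in> L" "s = map h w" by blast
      then have "set w \<subseteq> \<Sigma>" using D(5) by (auto simp: dfa_lang_def)
      then show "s \<in> lists \<Sigma>'" using assms(2) w(2) by (auto simp: image_subset_iff subset_iff)
    qed
    have "s \<in> nfa_lang \<Sigma>' \<Delta> {q0} F \<longleftrightarrow> s \<in> map h ` L" for s
    proof
      assume "s \<in> nfa_lang \<Sigma>' \<Delta> {q0} F"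
      then obtain q' where "q' \<in> F" "nrun \<Delta> q0 s q'" by (auto simp: nfa_lang_def)
      then obtain w where "w \<in> lists \<Sigma>" "map h w = s" "fold (\<lambda>x q. \<delta> q x) w q0 = q'"
        using run[OF D(3)] by blast
      then show "s \<in> map h ` L" using D(5) \<open>q' \<in> F\<close> by (auto simp: dfa_lang_def)
    next
      assume "s \<in> map h ` L"
      then obtain w where w: "w \<in> L" "s = map h w" by blast
      then have "nrun \<Delta> q0 s (fold (\<lambda>x q. \<delta> q x) w q0)"
        using run[OF D(3), of s "fold (\<lambda>x q. \<delta> q x) w q0"] D(5) by (auto simp: dfa_lang_def)
      then show "s \<in> nfa_lang \<Sigma>' \<Delta> {q0} F"
        using w D(5) \<open>map h ` L \<subseteq> lists \<Sigma>'\<close> by (auto simp: nfa_lang_def dfa_lang_def)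
    qed
    then show ?thesis by blast
  qed
  ultimately show ?thesis by simp
qed

lemma regular_quot:
  assumes "regular_on \<Sigma> L" "c \<in> \<Sigma>"
  shows "regular_on \<Sigma> {s \<in> lists \<Sigma>. \<exists>k. s @ replicate k c \<in> L}"
proof -
  obtain Q :: "nat set" and q0 \<delta> F where D: "finite \<Sigma>" "finite Q" "q0 \<in> Q" "\<forall>q\<in>Q. \<forall>x\<in>\<Sigma>. \<delta> q x \<in> Q"
    "L = dfa_lang \<Sigma> \<delta> q0 F" using regular_dfa[OF assms(1)] by blast
  have "regular_on \<Sigma> (dfa_lang \<Sigma> \<delta> q0 {q. \<exists>k. fold (\<lambda>x q. \<delta> q x) (replicate k c) q \<in> F})"
    by (rule dfa_regular[where Q = Q]) (use assms D in auto)
  moreover have "dfa_lang \<Sigma> \<delta> q0 {q. \<exists>k. fold (\<lambda>x q. \<delta> q x) (replicate k c) q \<in> F} =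
     {s \<in> lists \<Sigma>. \<exists>k. s @ replicate k c \<in> L}"
    using D(5) assms(2) by (auto simp: dfa_lang_def)
  ultimately show ?thesis by simp
qed

lemma good_snoc:
  "(\<exists>s k. w @ [x] = s @ replicate k c \<and> P s) \<longleftrightarrow> P (w @ [x]) \<or> (x = c \<and> (\<exists>s k. w = s @ replicate k c \<and> P s))"
proof
  assume "\<exists>s k. w @ [x] = s @ replicate k c \<and> P s"
  then obtain s k where sk: "w @ [x] = s @ replicate k c" "P s" by blast
  show "P (w @ [x]) \<or> (x = c \<and> (\<exists>s k. w = s @ replicate k c \<and> P s))"
  proof (cases k)
    case 0 then show ?thesis using sk by simp
  next
    case (Suc j)
    then have "w @ [x] = (s @ replicate j c) @ [c]" using sk by (simp add: replicate_append_same)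
    then show ?thesis using sk by blast
  qed
next
  assume "P (w @ [x]) \<or> (x = c \<and> (\<exists>s k. w = s @ replicate k c \<and> P s))"
  then show "\<exists>s k. w @ [x] = s @ replicate k c \<and> P s"
  proof
    assume "P (w @ [x])" then show ?thesis by (metis append_Nil2 replicate_0)
  next
    assume "x = c \<and> (\<exists>s k. w = s @ replicate k c \<and> P s)"
    then obtain s k where "x = c" "w = s @ replicate k c" "P s" by blast
    then show ?thesis by (metis append_assoc replicate_append_same replicate_Suc)
  qed
qed

lemma regular_padstar:
  assumes "regular_on \<Sigma> L" "c \<in> \<Sigma>"
  shows "regular_on \<Sigma> {s @ replicate k c | s k. s \<in> L}"
proof -
  obtain Q :: "nat set" and q0 \<delta> F where D: "finite \<Sigma>" "finite Q" "q0 \<in> Q" "\<forall>q\<in>Q. \<forall>x\<in>\<Sigma>. \<delta> q x \<in> Q"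
    "L = dfa_lang \<Sigma> \<delta> q0 F" using regular_dfa[OF assms(1)] by blast
  define \<delta>' where "\<delta>' = (\<lambda>(q, g) x. (\<delta> q x, \<delta> q x \<in> F \<or> (x = c \<and> g)))"
  define f where "f w = fold (\<lambda>x q. \<delta> q x) w q0" for w
  define good where "good w = (\<exists>s k. w = s @ replicate k c \<and> f s \<in> F)" for w
  have gs: "good (w @ [x]) = (f (w @ [x]) \<in> F \<or> (x = c \<and> good w))" for w x
    unfolding good_def using good_snoc[where P = "\<lambda>s. f s \<in> F" and w = w and x = x and c = c] by simp
  have key: "fold (\<lambda>x q. \<delta>' q x) w (q0, q0 \<in> F) = (f w, good w)" for w
  proof (induction w rule: rev_induct)
    case Nil
    have "good [] \<longleftrightarrow> q0 \<in> F" by (auto simp: good_def f_def)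
    then show ?case by (simp add: f_def)
  next
    case (snoc x w)
    have "f (w @ [x]) = \<delta> (f w) x" by (simp add: f_def)
    then show ?case using snoc gs[of w x] by (simp add: \<delta>'_def)
  qed
  have "regular_on \<Sigma> (dfa_lang \<Sigma> \<delta>' (q0, q0 \<in> F) {p. snd p})"
    by (rule dfa_regular[where Q = "Q \<times> UNIV"]) (use assms D in \<open>auto simp: \<delta>'_def\<close>)
  moreover have "dfa_lang \<Sigma> \<delta>' (q0, q0 \<in> F) {p. snd p} = {s @ replicate k c | s k. s \<in> L}"
    using D(5) assms(2) by (auto simp: dfa_lang_def key good_def f_def)
  ultimately show ?thesis by simp
qed

fun convr :: "'s list \<Rightarrow> 's list \<Rightarrow> ('s option \<times> 's option) list" where
  "convr [] [] = []"
| "convr (a # u) [] = (Some a, None) # convr u []"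
| "convr [] (b # v) = (None, Some b) # convr [] v"
| "convr (a # u) (b # v) = (Some a, Some b) # convr u v"

lemma length_convr: "length (convr u v) = max (length u) (length v)"
  by (induction u v rule: convr.induct) auto

lemma nth_convr: "i < max (length u) (length v) \<Longrightarrow>
  convr u v ! i = (if i < length u then Some (u ! i) else None, if i < length v then Some (v ! i) else None)"
  by (induction u v arbitrary: i rule: convr.induct) (auto simp: nth_Cons split: nat.split)

lemma conv_convr: "conv u v = convr u v"
  by (rule nth_equalityI) (auto simp: conv_def length_convr nth_convr)

lemma conv_simps[simp]:
  "conv [] [] = []"
  "conv (a # u) [] = (Some a, None) # conv u []"
  "conv [] (b # v) = (None, Some b) # conv [] v"
  "conv (a # u) (b # v) = (Some a, Some b) # conv u v"
  by (simp_all add: conv_convr)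

lemma length_conv[simp]: "length (conv u v) = max (length u) (length v)"
  by (simp add: conv_convr length_convr)

lemma conv_Nil_iff[simp]: "conv u v = [] \<longleftrightarrow> u = [] \<and> v = []"
  by (simp flip: length_0_conv)

definition ohd :: "'s list \<Rightarrow> 's option" where
  "ohd u = (case u of [] \<Rightarrow> None | a # _ \<Rightarrow> Some a)"

lemma ohd_simps[simp]: "ohd [] = None" "ohd (a # u) = Some a"
  by (simp_all add: ohd_def)

lemma ohd_None_iff[simp]: "ohd u = None \<longleftrightarrow> u = []"
  by (cases u) auto

lemma conv_unfold:
  "conv u v = (if u = [] \<and> v = [] then [] else (ohd u, ohd v) # conv (tl u) (tl v))"
  by (cases u; cases v) auto

definition nn :: "'s option \<times> 's option" where "nn = (None, None)"

lemma nn_notin_conv: "nn \<notin> set (conv u v)"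
  by (induction u v rule: convr.induct) (auto simp: nn_def)

lemma conv_lists: "conv u v \<in> lists (conv_alphabet S) \<longleftrightarrow> u \<in> lists S \<and> v \<in> lists S"
  by (induction u v rule: convr.induct) (auto simp: conv_alphabet_def)

lemma conv_swap: "conv v u = map prod.swap (conv u v)"
  by (induction u v rule: convr.induct) auto

lemma conv_diag: "conv u u = map (\<lambda>x. (Some x, Some x)) u"
  by (induction u) auto

definition pad :: "'s list \<Rightarrow> nat \<Rightarrow> 's option list" where
  "pad u n = map Some u @ replicate (n - length u) None"

lemma map_fst_conv: "map fst (conv u v @ replicate k nn) = map Some u @ replicate (max (length u) (length v) - length u + k) None"
  by (induction u v rule: convr.induct) (auto simp: nn_def replicate_add[symmetric] max_def)

lemma map_snd_conv: "map snd (conv u v @ replicate k nn) = map Some v @ replicate (max (length u) (length v) - length v + k) None"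
  by (induction u v rule: convr.induct) (auto simp: nn_def replicate_add[symmetric] max_def)

lemma pad_inj: "map Some u @ replicate a None = map Some u' @ replicate b None \<Longrightarrow> u = u'"
proof (induction u arbitrary: u')
  case Nil then show ?case by (cases u'; cases a) auto
next
  case (Cons x u) then show ?case by (cases u') (auto simp: Cons_replicate_eq)
qed

lemma conv_inj: "conv u v = conv u' v' \<Longrightarrow> u = u' \<and> v = v'"
  using map_fst_conv[of u v 0] map_fst_conv[of u' v' 0] map_snd_conv[of u v 0] map_snd_conv[of u' v' 0]
  by (metis append_Nil2 pad_inj replicate_0)

lemma zip_pad: "length u \<le> n \<Longrightarrow> length v \<le> n \<Longrightarrow>
  zip (map Some u @ replicate (n - length u) None) (map Some v @ replicate (n - length v) None)
   = conv u v @ replicate (n - max (length u) (length v)) nn"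
proof (induction u v arbitrary: n rule: convr.induct)
  case 1 then show ?case by (simp add: nn_def zip_replicate)
next
  case (2 a u) then show ?case by (cases n) auto
next
  case (3 b v) then show ?case by (cases n) auto
next
  case (4 a u b v) then show ?case by (cases n) auto
qed

lemma strip_eq:
  assumes "xs @ replicate a c = ys @ replicate b c" "c \<notin> set xs" "c \<notin> set ys"
  shows "xs = ys"
proof -
  have d: "dropWhile (\<lambda>z. z = c) (rev (zs @ replicate k c)) = rev zs" if "c \<notin> set zs" for zs k
  proof -
    have "rev (zs @ replicate k c) = replicate k c @ rev zs" by simp
    moreover have "dropWhile (\<lambda>z. z = c) (replicate k c @ rev zs) = dropWhile (\<lambda>z. z = c) (rev zs)"
      by (induction k) auto
    moreover have "dropWhile (\<lambda>z. z = c) (rev zs) = rev zs"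
      using that by (cases "rev zs") auto
    ultimately show ?thesis by simp
  qed
  from d[OF assms(2), of a] d[OF assms(3), of b] assms(1) show ?thesis by simp
qed

definition lang :: "('s list \<times> 's list) set \<Rightarrow> ('s option \<times> 's option) list set" where
  "lang R = {conv u v | u v. (u, v) \<in> R}"

lemma FA_lang: "FA_recognizable S R \<longleftrightarrow> regular_on (conv_alphabet S) (lang R)"
  by (simp add: FA_recognizable_def lang_def)

lemma lang_mem: "conv u v \<in> lang R \<longleftrightarrow> (u, v) \<in> R"
  by (auto simp: lang_def dest: conv_inj)

lemma FA_lists:
  assumes "FA_recognizable S R" "(u, v) \<in> R" shows "u \<in> lists S \<and> v \<in> lists S"
proof -
  have "conv u v \<in> lang R" using assms(2) by (auto simp: lang_def)
  then have "conv u v \<in> lists (conv_alphabet S)" using regular_subset assms(1)[unfolded FA_lang] by blast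
  then show ?thesis by (simp add: conv_lists)
qed

lemma finite_conv_alphabet: "finite S \<Longrightarrow> finite (conv_alphabet S)"
  by (simp add: conv_alphabet_def)

lemma conv_alphabet_mono: "S \<subseteq> S' \<Longrightarrow> conv_alphabet S \<subseteq> conv_alphabet S'"
  by (auto simp: conv_alphabet_def)

lemma regular_finite: "regular_on \<Sigma> L \<Longrightarrow> finite \<Sigma>"
  by (simp add: regular_on_def)

lemma FA_finite: "FA_recognizable S R \<Longrightarrow> finite S"
proof -
  assume "FA_recognizable S R"
  then have "finite (conv_alphabet S)" by (auto simp: FA_lang dest: regular_finite)
  moreover have "conv_alphabet S \<supseteq> (\<lambda>a. (Some a, None)) ` S" by (auto simp: conv_alphabet_def)
  moreover have "inj (\<lambda>a. (Some a, None))" by (auto simp: inj_def)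
  ultimately show "finite S" by (metis finite_imageD finite_subset inj_on_subset subset_UNIV)
qed

lemma FA_converse:
  assumes "FA_recognizable S R"
  shows "FA_recognizable S (R\<inverse>)"
proof -
  have sw: "map prod.swap (conv u v) = conv v u" for u v :: "'a list"
    by (simp add: conv_swap[of v u])
  have "lang (R\<inverse>) = map prod.swap ` lang R"
  proof (intro equalityI subsetI)
    fix x assume "x \<in> lang (R\<inverse>)"
    then obtain u v where "x = conv u v" "(v, u) \<in> R" by (auto simp: lang_def)
    moreover have "conv v u \<in> lang R" using \<open>(v, u) \<in> R\<close> by (auto simp: lang_def)
    ultimately show "x \<in> map prod.swap ` lang R" using sw[of v u] by (metis image_eqI)
  next
    fix x assume "x \<in> map prod.swap ` lang R"
    then obtain u v where "x = map prod.swap (conv u v)" "(u, v) \<in> R" by (auto simp: lang_def)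
    then show "x \<in> lang (R\<inverse>)" using sw[of u v] by (auto simp: lang_def)
  qed
  moreover have "regular_on (conv_alphabet S) (map prod.swap ` lang R)"
    by (rule regular_hom) (use assms FA_finite in \<open>auto simp: FA_lang conv_alphabet_def finite_conv_alphabet\<close>)
  ultimately show ?thesis by (simp add: FA_lang)
qed

lemma FA_diag:
  assumes "regular_on S L"
  shows "FA_recognizable S {(u, u) | u. u \<in> L}"
proof -
  have "lang {(u, u) | u. u \<in> L} = map (\<lambda>x. (Some x, Some x)) ` L"
    by (auto simp: lang_def conv_diag)
  moreover have "regular_on (conv_alphabet S) (map (\<lambda>x. (Some x, Some x)) ` L)"
    by (rule regular_hom[OF assms]) (use assms in \<open>auto simp: conv_alphabet_def regular_on_def\<close>)
  ultimately show ?thesis by (simp add: FA_lang)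
qed

definition p12 :: "'a \<times> 'b \<times> 'c \<Rightarrow> 'a \<times> 'b" where "p12 = (\<lambda>(a, b, c). (a, b))"
definition p23 :: "'a \<times> 'b \<times> 'c \<Rightarrow> 'b \<times> 'c" where "p23 = (\<lambda>(a, b, c). (b, c))"
definition p13 :: "'a \<times> 'b \<times> 'c \<Rightarrow> 'a \<times> 'c" where "p13 = (\<lambda>(a, b, c). (a, c))"

lemma zip3_proj:
  assumes "length A = length B" "length B = length C"
  shows "map p12 (zip A (zip B C)) = zip A B" "map p23 (zip A (zip B C)) = zip B C"
    "map p13 (zip A (zip B C)) = zip A C"
  using assms by (induction A B C rule: list_induct3) (auto simp: p12_def p23_def p13_def)

lemma tracks3: "t = zip (map fst t) (zip (map (fst \<circ> snd) t) (map (snd \<circ> snd) t))"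
  by (induction t) auto

lemma FA_comp:
  assumes "FA_recognizable S R1" "FA_recognizable S R2"
  shows "FA_recognizable S (R1 O R2)"
proof -
  have fS: "finite S" using FA_finite[OF assms(1)] .
  define Opt where "Opt = insert None (Some ` S)"
  define E2 where "E2 = Opt \<times> Opt"
  define E3 where "E3 = Opt \<times> Opt \<times> Opt"
  define \<Sigma>2 where "\<Sigma>2 = conv_alphabet S"
  have fin: "finite Opt" "finite E2" "finite E3" "finite \<Sigma>2"
    using fS by (auto simp: Opt_def E2_def E3_def \<Sigma>2_def conv_alphabet_def)
  have sub: "\<Sigma>2 \<subseteq> E2" by (auto simp: \<Sigma>2_def E2_def Opt_def conv_alphabet_def)
  have nnE: "nn \<in> E2" by (auto simp: nn_def E2_def Opt_def)
  define P1 where "P1 = {s @ replicate k nn | s k. s \<in> lang R1}"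
  define P2 where "P2 = {s @ replicate k nn | s k. s \<in> lang R2}"
  have rP1: "regular_on E2 P1" unfolding P1_def
    by (rule regular_padstar[OF regular_enlarge[OF assms(1)[unfolded FA_lang] _ fin(2)] nnE])
      (use sub in \<open>simp add: \<Sigma>2_def\<close>)
  have rP2: "regular_on E2 P2" unfolding P2_def
    by (rule regular_padstar[OF regular_enlarge[OF assms(2)[unfolded FA_lang] _ fin(2)] nnE])
      (use sub in \<open>simp add: \<Sigma>2_def\<close>)
  define Z where "Z = {t \<in> lists E3. map p12 t \<in> P1} \<inter> {t \<in> lists E3. map p23 t \<in> P2}"
  have rZ: "regular_on E3 Z" unfolding Z_def
    by (intro regular_Int regular_invhom[OF rP1] regular_invhom[OF rP2] fin)
      (auto simp: E3_def E2_def p12_def p23_def)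
  define Y where "Y = map p13 ` Z"
  have rY: "regular_on E2 Y" unfolding Y_def
    by (rule regular_hom[OF rZ _ fin(2)]) (auto simp: E3_def E2_def p13_def)
  define Res where "Res = {s \<in> lists E2. \<exists>k. s @ replicate k nn \<in> Y} \<inter> lists \<Sigma>2"
  have rRes: "regular_on \<Sigma>2 Res" unfolding Res_def
    by (rule regular_restrict[OF regular_quot[OF rY nnE] sub])
  have lists1: "u \<in> lists S \<and> v \<in> lists S" if "(u, v) \<in> R1" for u v using FA_lists[OF assms(1) that] .
  have lists2: "u \<in> lists S \<and> v \<in> lists S" if "(u, v) \<in> R2" for u v using FA_lists[OF assms(2) that] .
  have padO: "set (map Some u @ replicate k None) \<subseteq> Opt" if "u \<in> lists S" for u k
    using that by (auto simp: Opt_def)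
  have "Res = lang (R1 O R2)"
  proof (intro equalityI subsetI)
    fix s assume s: "s \<in> Res"
    then have sl: "s \<in> lists \<Sigma>2" by (simp add: Res_def)
    from s obtain k where "s @ replicate k nn \<in> Y" by (auto simp: Res_def)
    then obtain t where t: "t \<in> Z" "s @ replicate k nn = map p13 t" by (auto simp: Y_def)
    from t(1) have "map p12 t \<in> P1" "map p23 t \<in> P2" by (simp_all add: Z_def)
    then obtain s1 k1 u v s2 k2 v' w where 1: "map p12 t = s1 @ replicate k1 nn" "s1 = conv u v" "(u, v) \<in> R1"
      and 2: "map p23 t = s2 @ replicate k2 nn" "s2 = conv v' w" "(v', w) \<in> R2"
      unfolding P1_def P2_def lang_def by blast
    define A where "A = map fst t"
    define B where "B = map (fst \<circ> snd) t"
    define C where "C = map (snd \<circ> snd) t"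
    have tz: "t = zip A (zip B C)" unfolding A_def B_def C_def by (rule tracks3)
    have len: "length A = length t" "length B = length t" "length C = length t"
      by (simp_all add: A_def B_def C_def)
    have m: "map fst (map p12 t) = A" "map snd (map p12 t) = B" "map fst (map p23 t) = B" "map snd (map p23 t) = C"
      by (auto simp: A_def B_def C_def p12_def p23_def case_prod_unfold)
    have eA: "A = map Some u @ replicate (max (length u) (length v) - length u + k1) None"
      using m(1) unfolding 1 by (simp only: map_fst_conv)
    have eB: "B = map Some v @ replicate (max (length u) (length v) - length v + k1) None"
      using m(2) unfolding 1 by (simp only: map_snd_conv)
    have eB': "B = map Some v' @ replicate (max (length v') (length w) - length v' + k2) None"
      using m(3) unfolding 2 by (simp only: map_fst_conv)
    have eC: "C = map Some w @ replicate (max (length v') (length w) - length w + k2) None"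
      using m(4) unfolding 2 by (simp only: map_snd_conv)
    have "map Some v @ replicate (max (length u) (length v) - length v + k1) None
        = map Some v' @ replicate (max (length v') (length w) - length v' + k2) None"
      using eB eB' by (rule trans[OF sym])
    then have "v = v'" by (rule pad_inj)
    define n where "n = length t"
    have lu: "length u \<le> n" and lw: "length w \<le> n"
      using eA eC len by (auto simp: n_def)
    have eA': "A = map Some u @ replicate (n - length u) None" using eA len by (simp add: n_def)
    have eC': "C = map Some w @ replicate (n - length w) None" using eC len by (simp add: n_def)
    have "map p13 t = map p13 (zip A (zip B C))" by (subst tz) (rule refl)
    also have "\<dots> = zip A C" using len by (intro zip3_proj(3)) simp_all
    also have "\<dots> = conv u w @ replicate (n - max (length u) (length w)) nn"
      unfolding eA' eC' by (rule zip_pad[OF lu lw])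
    finally have "s @ replicate k nn = conv u w @ replicate (n - max (length u) (length w)) nn"
      using t(2) by simp
    moreover have "nn \<notin> set s" using sl by (auto simp: \<Sigma>2_def conv_alphabet_def nn_def)
    ultimately have "s = conv u w" by (rule strip_eq[OF _ _ nn_notin_conv])
    moreover have "(u, w) \<in> R1 O R2" using 1 2 \<open>v = v'\<close> by blast
    ultimately show "s \<in> lang (R1 O R2)" unfolding lang_def by blast
  next
    fix s assume "s \<in> lang (R1 O R2)"
    then obtain u v w where s: "s = conv u w" "(u, v) \<in> R1" "(v, w) \<in> R2" by (auto simp: lang_def)
    have l: "u \<in> lists S" "v \<in> lists S" "w \<in> lists S" using lists1[OF s(2)] lists2[OF s(3)] by auto
    define n where "n = max (length u) (max (length v) (length w))"
    define A where "A = map Some u @ replicate (n - length u) None"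
    define B where "B = map Some v @ replicate (n - length v) None"
    define C where "C = map Some w @ replicate (n - length w) None"
    have len: "length A = length B" "length B = length C" by (auto simp: A_def B_def C_def n_def)
    define t where "t = zip A (zip B C)"
    have st: "set t \<subseteq> set A \<times> (set B \<times> set C)" unfolding t_def
      by (auto dest: set_zip_leftD set_zip_rightD)
    have "set A \<subseteq> Opt" "set B \<subseteq> Opt" "set C \<subseteq> Opt"
      using padO[OF l(1)] padO[OF l(2)] padO[OF l(3)] by (simp_all only: A_def B_def C_def)
    then have "set t \<subseteq> E3" using st unfolding E3_def by blast
    then have tE: "t \<in> lists E3" by auto
    have "map p12 t = zip A B" unfolding t_def by (rule zip3_proj(1)[OF len])
    also have "\<dots> = conv u v @ replicate (n - max (length u) (length v)) nn"
      unfolding A_def B_def by (rule zip_pad) (simp_all add: n_def)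
    finally have e12: "map p12 t = conv u v @ replicate (n - max (length u) (length v)) nn" .
    have "conv u v @ replicate (n - max (length u) (length v)) nn \<in> P1"
      using s(2) unfolding P1_def lang_def by blast
    then have i1: "map p12 t \<in> P1" by (simp only: e12)
    have "map p23 t = zip B C" unfolding t_def by (rule zip3_proj(2)[OF len])
    also have "\<dots> = conv v w @ replicate (n - max (length v) (length w)) nn"
      unfolding B_def C_def by (rule zip_pad) (simp_all add: n_def)
    finally have e23: "map p23 t = conv v w @ replicate (n - max (length v) (length w)) nn" .
    have "conv v w @ replicate (n - max (length v) (length w)) nn \<in> P2"
      using s(3) unfolding P2_def lang_def by blast
    then have i2: "map p23 t \<in> P2" by (simp only: e23)
    have tZ: "t \<in> Z" using tE i1 i2 by (simp add: Z_def)
    have "map p13 t = zip A C" unfolding t_def by (rule zip3_proj(3)[OF len])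
    also have "\<dots> = conv u w @ replicate (n - max (length u) (length w)) nn"
      unfolding A_def C_def by (rule zip_pad) (simp_all add: n_def)
    finally have e13: "map p13 t = conv u w @ replicate (n - max (length u) (length w)) nn" .
    have inY: "s @ replicate (n - max (length u) (length w)) nn \<in> Y"
      unfolding Y_def using tZ e13 s(1) by (metis image_eqI)
    have sS: "s \<in> lists \<Sigma>2" using l unfolding s(1) \<Sigma>2_def by (simp add: conv_lists)
    then have "s \<in> lists E2" using sub by auto
    then show "s \<in> Res" using sS inY unfolding Res_def by blast
  qed
  then show ?thesis using rRes by (simp add: FA_lang \<Sigma>2_def)
qed

definition trk :: "'s \<Rightarrow> bool \<Rightarrow> 's option \<Rightarrow> 's option \<Rightarrow> bool \<Rightarrow> bool" where
  "trk x e c d e' \<longleftrightarrow> (\<not> e \<and> \<not> e' \<and> c \<noteq> None \<and> d = c) \<or> (\<not> e \<and> e' \<and> c = Some x \<and> d = None)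
     \<or> (e \<and> e' \<and> c = None \<and> d = None)"

definition Xs :: "'s \<Rightarrow> bool \<Rightarrow> 's list \<Rightarrow> 's list" where
  "Xs x e u = (if e then [] else u @ [x])"

lemma trk_back:
  assumes "trk x e c d e'" "e' \<longrightarrow> u' = []" "\<forall>a. c = Some a \<longrightarrow> a \<in> S" "u' \<in> lists S"
  shows "\<exists>u. u \<in> lists S \<and> (e \<longrightarrow> u = []) \<and> ohd (Xs x e u) = c \<and> tl (Xs x e u) = Xs x e' u'
     \<and> ohd u = d \<and> tl u = u'"
  using assms(1) unfolding trk_def
proof (elim disjE conjE)
  assume h: "\<not> e" "\<not> e'" "c \<noteq> None" "d = c"
  then obtain a where a: "c = Some a" by auto
  show ?thesis
    by (rule exI[of _ "a # u'"]) (use h a assms(3,4) in \<open>simp add: Xs_def\<close>)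
next
  assume h: "\<not> e" "e'" "c = Some x" "d = None"
  then have "u' = []" using assms(2) by simp
  then show ?thesis
    by (intro exI[of _ "[]"]) (use h in \<open>simp add: Xs_def\<close>)
next
  assume h: "e" "e'" "c = None" "d = None"
  then have "u' = []" using assms(2) by simp
  then show ?thesis
    by (intro exI[of _ "[]"]) (use h in \<open>simp add: Xs_def\<close>)
qed

lemma trk_fwd:
  assumes "e \<longrightarrow> u = []"
  shows "\<exists>d e'. trk x e (ohd (Xs x e u)) d e' \<and> tl (Xs x e u) = Xs x e' (tl u) \<and> d = ohd u \<and> (e' \<longrightarrow> tl u = [])"
proof (cases e)
  case True
  then show ?thesis using assms by (intro exI[of _ None] exI[of _ True]) (simp add: trk_def Xs_def)
next
  case False
  show ?thesis
  proof (cases u)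
    case Nil
    then show ?thesis using False by (intro exI[of _ None] exI[of _ True]) (simp add: trk_def Xs_def)
  next
    case (Cons a w)
    then show ?thesis using False by (intro exI[of _ "Some a"] exI[of _ False]) (simp add: trk_def Xs_def)
  qed
qed

lemma Xs_Nil_iff: "Xs x e u = [] \<longleftrightarrow> e"
  by (simp add: Xs_def)

definition st :: "('q \<Rightarrow> ('s option \<times> 's option) \<Rightarrow> 'q) \<Rightarrow> 'q \<Rightarrow> 's option \<Rightarrow> 's option \<Rightarrow> 'q" where
  "st \<delta> q d1 d2 = (if d1 = None \<and> d2 = None then q else \<delta> q (d1, d2))"

lemma fold_conv_step:
  "fold (\<lambda>a q. \<delta> q a) (conv u v) q = fold (\<lambda>a q. \<delta> q a) (conv (tl u) (tl v)) (st \<delta> q (ohd u) (ohd v))"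
proof (cases "u = [] \<and> v = []")
  case True then show ?thesis by (simp add: st_def)
next
  case False
  then have "conv u v = (ohd u, ohd v) # conv (tl u) (tl v)" by (subst conv_unfold) simp
  moreover have "\<not> (ohd u = None \<and> ohd v = None)" using False by simp
  ultimately show ?thesis by (auto simp: st_def)
qed

lemma FA_append:
  assumes "FA_recognizable S R" "x \<in> S" "y \<in> S"
  shows "FA_recognizable S {(u @ [x], v @ [y]) | u v. (u, v) \<in> R}"
proof -
  define \<Sigma>2 where "\<Sigma>2 = conv_alphabet S"
  obtain Q :: "nat set" and q0 \<delta> F where D: "finite \<Sigma>2" "finite Q" "q0 \<in> Q" "\<forall>q\<in>Q. \<forall>a\<in>\<Sigma>2. \<delta> q a \<in> Q"
    "lang R = dfa_lang \<Sigma>2 \<delta> q0 F" using regular_dfa[OF assms(1)[unfolded FA_lang]] unfolding \<Sigma>2_def by blast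
  define \<Delta> where "\<Delta> = {((q, e1, e2), c, (q', e1', e2')) | q e1 e2 c q' e1' e2'. q \<in> Q \<and> c \<in> \<Sigma>2 \<and>
      (\<exists>d1 d2. trk x e1 (fst c) d1 e1' \<and> trk y e2 (snd c) d2 e2' \<and> q' = st \<delta> q d1 d2)}"
  have cS: "\<forall>a. fst c = Some a \<longrightarrow> a \<in> S" "\<forall>a. snd c = Some a \<longrightarrow> a \<in> S" if "c \<in> \<Sigma>2" for c
    using that by (auto simp: \<Sigma>2_def conv_alphabet_def)
  have st_closed: "st \<delta> q d1 d2 \<in> Q" if "q \<in> Q" "c \<in> \<Sigma>2" "trk x e1 (fst c) d1 e1'" "trk y e2 (snd c) d2 e2'"
    for q c d1 d2 e1 e2 e1' e2'
  proof (cases "d1 = None \<and> d2 = None")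
    case True then show ?thesis using that(1) by (simp add: st_def)
  next
    case False
    have "d1 = None \<or> d1 = fst c" "d2 = None \<or> d2 = snd c" using that(3,4) by (auto simp: trk_def)
    then have "(d1, d2) \<in> \<Sigma>2" using False that(2) by (cases c) (auto simp: \<Sigma>2_def conv_alphabet_def)
    then show ?thesis using that(1) D(4) False by (simp add: st_def)
  qed
  let ?f = "\<lambda>w q. fold (\<lambda>a q. \<delta> q a) w q"
  have run: "nrun \<Delta> (q, e1, e2) s (q', True, True) \<longleftrightarrow>
    (\<exists>u v. u \<in> lists S \<and> v \<in> lists S \<and> (e1 \<longrightarrow> u = []) \<and> (e2 \<longrightarrow> v = []) \<and>
       s = conv (Xs x e1 u) (Xs y e2 v) \<and> q' = ?f (conv u v) q)" if "q \<in> Q" for q e1 e2 s q'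
    using that
  proof (induction s arbitrary: q e1 e2)
    case Nil
    show ?case
    proof
      assume "nrun \<Delta> (q, e1, e2) [] (q', True, True)"
      then have "q' = q" "e1" "e2" by auto
      then show "\<exists>u v. u \<in> lists S \<and> v \<in> lists S \<and> (e1 \<longrightarrow> u = []) \<and> (e2 \<longrightarrow> v = []) \<and>
       [] = conv (Xs x e1 u) (Xs y e2 v) \<and> q' = ?f (conv u v) q"
        by (intro exI[of _ "[]"]) (simp add: Xs_def)
    next
      assume "\<exists>u v. u \<in> lists S \<and> v \<in> lists S \<and> (e1 \<longrightarrow> u = []) \<and> (e2 \<longrightarrow> v = []) \<and>
       [] = conv (Xs x e1 u) (Xs y e2 v) \<and> q' = ?f (conv u v) q"
      then obtain u v where h: "(e1 \<longrightarrow> u = [])" "(e2 \<longrightarrow> v = [])" "[] = conv (Xs x e1 u) (Xs y e2 v)"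
        "q' = ?f (conv u v) q" by blast
      from h(3)[symmetric] have "e1" "e2" by (simp_all add: Xs_Nil_iff)
      with h show "nrun \<Delta> (q, e1, e2) [] (q', True, True)" by simp
    qed
  next
    case (Cons c s)
    show ?case
    proof
      assume "nrun \<Delta> (q, e1, e2) (c # s) (q', True, True)"
      then obtain p where p: "((q, e1, e2), c, p) \<in> \<Delta>" "nrun \<Delta> p s (q', True, True)" by auto
      obtain q1 e1' e2' where pe: "p = (q1, e1', e2')" by (cases p) auto
      from p(1) obtain d1 d2 where tr: "c \<in> \<Sigma>2" "trk x e1 (fst c) d1 e1'" "trk y e2 (snd c) d2 e2'"
        "q1 = st \<delta> q d1 d2" unfolding pe \<Delta>_def by blast
      have q1Q: "q1 \<in> Q" using st_closed[OF Cons.prems tr(1,2,3)] tr(4) by simp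
      have "nrun \<Delta> (q1, e1', e2') s (q', True, True)" using p(2) pe by simp
      then have "\<exists>u v. u \<in> lists S \<and> v \<in> lists S \<and> (e1' \<longrightarrow> u = []) \<and> (e2' \<longrightarrow> v = []) \<and>
       s = conv (Xs x e1' u) (Xs y e2' v) \<and> q' = ?f (conv u v) q1"
        by (rule Cons.IH[OF q1Q, THEN iffD1])
      then obtain u' v' where ih: "u' \<in> lists S" "v' \<in> lists S" "e1' \<longrightarrow> u' = []" "e2' \<longrightarrow> v' = []"
        "s = conv (Xs x e1' u') (Xs y e2' v')" "q' = ?f (conv u' v') q1"
        by (elim exE conjE) simp
      obtain u where u: "u \<in> lists S" "e1 \<longrightarrow> u = []" "ohd (Xs x e1 u) = fst c" "tl (Xs x e1 u) = Xs x e1' u'"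
        "ohd u = d1" "tl u = u'"
        using trk_back[OF tr(2) ih(3) cS(1)[OF tr(1)] ih(1)] by blast
      obtain v where v: "v \<in> lists S" "e2 \<longrightarrow> v = []" "ohd (Xs y e2 v) = snd c" "tl (Xs y e2 v) = Xs y e2' v'"
        "ohd v = d2" "tl v = v'"
        using trk_back[OF tr(3) ih(4) cS(2)[OF tr(1)] ih(2)] by blast
      have "c \<noteq> (None, None)" using tr(1) by (auto simp: \<Sigma>2_def conv_alphabet_def)
      then have ne: "\<not> (Xs x e1 u = [] \<and> Xs y e2 v = [])" using u(3) v(3) by (cases c) auto
      have "conv (Xs x e1 u) (Xs y e2 v) = (ohd (Xs x e1 u), ohd (Xs y e2 v)) # conv (tl (Xs x e1 u)) (tl (Xs y e2 v))"
        using ne by (subst conv_unfold) simp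
      also have "\<dots> = c # s" using u(3,4) v(3,4) ih(5) by simp
      finally have e: "c # s = conv (Xs x e1 u) (Xs y e2 v)" by simp
      have "q' = ?f (conv u v) q"
        using ih(6) tr(4) u(5,6) v(5,6) fold_conv_step[of \<delta> u v q] by simp
      then show "\<exists>u v. u \<in> lists S \<and> v \<in> lists S \<and> (e1 \<longrightarrow> u = []) \<and> (e2 \<longrightarrow> v = []) \<and>
       c # s = conv (Xs x e1 u) (Xs y e2 v) \<and> q' = ?f (conv u v) q"
        using u(1,2) v(1,2) e by blast
    next
      assume "\<exists>u v. u \<in> lists S \<and> v \<in> lists S \<and> (e1 \<longrightarrow> u = []) \<and> (e2 \<longrightarrow> v = []) \<and>
       c # s = conv (Xs x e1 u) (Xs y e2 v) \<and> q' = ?f (conv u v) q"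
      then obtain u v where h: "u \<in> lists S" "v \<in> lists S" "e1 \<longrightarrow> u = []" "e2 \<longrightarrow> v = []"
        "c # s = conv (Xs x e1 u) (Xs y e2 v)" "q' = ?f (conv u v) q" by blast
      obtain d1 e1' where t1: "trk x e1 (ohd (Xs x e1 u)) d1 e1'" "tl (Xs x e1 u) = Xs x e1' (tl u)" "d1 = ohd u"
        "e1' \<longrightarrow> tl u = []" using trk_fwd[OF h(3)] by blast
      obtain d2 e2' where t2: "trk y e2 (ohd (Xs y e2 v)) d2 e2'" "tl (Xs y e2 v) = Xs y e2' (tl v)" "d2 = ohd v"
        "e2' \<longrightarrow> tl v = []" using trk_fwd[OF h(4)] by blast
      have ne: "\<not> (Xs x e1 u = [] \<and> Xs y e2 v = [])" using h(5) by auto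
      then have "conv (Xs x e1 u) (Xs y e2 v) = (ohd (Xs x e1 u), ohd (Xs y e2 v)) # conv (tl (Xs x e1 u)) (tl (Xs y e2 v))"
        by (subst conv_unfold) simp
      then have cs: "c = (ohd (Xs x e1 u), ohd (Xs y e2 v))" "s = conv (Xs x e1' (tl u)) (Xs y e2' (tl v))"
        using h(5) t1(2) t2(2) by simp_all
      have "Xs x e1 u \<in> lists S" "Xs y e2 v \<in> lists S" using h(1,2) assms(2,3) by (simp_all add: Xs_def)
      then have "conv (Xs x e1 u) (Xs y e2 v) \<in> lists \<Sigma>2" by (simp add: conv_lists \<Sigma>2_def)
      then have cin: "c \<in> \<Sigma>2" using h(5) by (metis list.set_intros(1) in_listsD)
      have tr: "((q, e1, e2), c, (st \<delta> q d1 d2, e1', e2')) \<in> \<Delta>"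
        unfolding \<Delta>_def using Cons.prems cin t1(1) t2(1) cs(1) by auto
      have k1: "trk x e1 (fst c) d1 e1'" "trk y e2 (snd c) d2 e2'" using t1(1) t2(1) cs(1) by simp_all
      have sQ: "st \<delta> q d1 d2 \<in> Q" by (rule st_closed[OF Cons.prems cin k1])
      have tlS1: "tl u \<in> lists S" using h(1) by (cases u) auto
      have tlS2: "tl v \<in> lists S" using h(2) by (cases v) auto
      note tlS = tlS1 tlS2
      have "q' = ?f (conv (tl u) (tl v)) (st \<delta> q d1 d2)"
        using h(6) t1(3) t2(3) fold_conv_step[of \<delta> u v q] by simp
      then have "nrun \<Delta> (st \<delta> q d1 d2, e1', e2') s (q', True, True)"
        by (intro Cons.IH[OF sQ, THEN iffD2] exI[of _ "tl u"] exI[of _ "tl v"]) (simp add: tlS t1(4) t2(4) cs(2))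
      then show "nrun \<Delta> (q, e1, e2) (c # s) (q', True, True)" using tr by auto
    qed
  qed
  have reg: "regular_on \<Sigma>2 (nfa_lang \<Sigma>2 \<Delta> {(q0, False, False)} {(q, True, True) | q. q \<in> F})"
  proof (rule nfa_regular[where Q = "Q \<times> UNIV \<times> UNIV"])
    show "\<forall>p a r. (p, a, r) \<in> \<Delta> \<longrightarrow> p \<in> Q \<times> UNIV \<times> UNIV \<longrightarrow> a \<in> \<Sigma>2 \<longrightarrow> r \<in> Q \<times> UNIV \<times> UNIV"
    proof (intro allI impI)
      fix p a r assume "(p, a, r) \<in> \<Delta>" "p \<in> Q \<times> UNIV \<times> UNIV" "a \<in> \<Sigma>2"
      then obtain q e1 e2 q' e1' e2' d1 d2 where "p = (q, e1, e2)" "r = (q', e1', e2')" "q \<in> Q"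
        "trk x e1 (fst a) d1 e1'" "trk y e2 (snd a) d2 e2'" "q' = st \<delta> q d1 d2"
        unfolding \<Delta>_def by blast
      then show "r \<in> Q \<times> UNIV \<times> UNIV" using st_closed \<open>a \<in> \<Sigma>2\<close> by blast
    qed
  qed (use D in auto)
  have "nfa_lang \<Sigma>2 \<Delta> {(q0, False, False)} {(q, True, True) | q. q \<in> F} = lang {(u @ [x], v @ [y]) | u v. (u, v) \<in> R}"
  proof (intro equalityI subsetI)
    fix s assume "s \<in> nfa_lang \<Sigma>2 \<Delta> {(q0, False, False)} {(q, True, True) | q. q \<in> F}"
    then obtain q' where q': "q' \<in> F" "nrun \<Delta> (q0, False, False) s (q', True, True)"
      unfolding nfa_lang_def by blast
    then obtain u v where uv: "u \<in> lists S" "v \<in> lists S" "s = conv (Xs x False u) (Xs y False v)"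
      "q' = ?f (conv u v) q0" using run[OF D(3), THEN iffD1, OF q'(2)] by (elim exE conjE) simp
    have "conv u v \<in> lang R" using uv q'(1) D(5) by (simp add: dfa_lang_def conv_lists \<Sigma>2_def)
    then have "(u, v) \<in> R" by (simp add: lang_mem)
    then show "s \<in> lang {(u @ [x], v @ [y]) | u v. (u, v) \<in> R}"
      using uv(3) unfolding lang_def Xs_def by auto
  next
    fix s assume "s \<in> lang {(u @ [x], v @ [y]) | u v. (u, v) \<in> R}"
    then obtain u v where uv: "s = conv (u @ [x]) (v @ [y])" "(u, v) \<in> R" unfolding lang_def by blast
    have l: "u \<in> lists S" "v \<in> lists S" using FA_lists[OF assms(1) uv(2)] by auto
    have "conv u v \<in> lang R" using uv(2) by (simp add: lang_mem)
    then have fF: "?f (conv u v) q0 \<in> F" using D(5) by (simp add: dfa_lang_def)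
    have "nrun \<Delta> (q0, False, False) s (?f (conv u v) q0, True, True)"
      using run[OF D(3)] l uv(1) unfolding Xs_def by auto
    moreover have "s \<in> lists \<Sigma>2" using uv(1) l assms(2,3) by (simp add: conv_lists \<Sigma>2_def)
    ultimately show "s \<in> nfa_lang \<Sigma>2 \<Delta> {(q0, False, False)} {(q, True, True) | q. q \<in> F}"
      using fF unfolding nfa_lang_def by blast
  qed
  then show ?thesis using reg by (simp add: FA_lang \<Sigma>2_def)
qed

lemma FA_enlarge:
  assumes "FA_recognizable S R" "S \<subseteq> S'" "finite S'"
  shows "FA_recognizable S' R"
  using regular_enlarge[OF assms(1)[unfolded FA_lang] conv_alphabet_mono[OF assms(2)] finite_conv_alphabet[OF assms(3)]]
  by (simp add: FA_lang)

lemma FA_UN: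
  assumes "finite I" "finite S" "\<And>i. i \<in> I \<Longrightarrow> FA_recognizable S (R i)"
  shows "FA_recognizable S (\<Union>i\<in>I. R i)"
proof -
  have "lang (\<Union>i\<in>I. R i) = (\<Union>i\<in>I. lang (R i))" by (auto simp: lang_def)
  moreover have "regular_on (conv_alphabet S) (\<Union>i\<in>I. lang (R i))"
    using assms by (intro regular_UN finite_conv_alphabet) (auto simp: FA_lang)
  ultimately show ?thesis by (simp add: FA_lang)
qed

lemma regular_snoc_set:
  assumes "regular_on \<Sigma> L" "T \<subseteq> \<Sigma>"
  shows "regular_on \<Sigma> {u @ [t] | u t. u \<in> L \<and> t \<in> T}"
proof -
  obtain Q :: "nat set" and q0 \<delta> F where D: "finite \<Sigma>" "finite Q" "q0 \<in> Q" "\<forall>q\<in>Q. \<forall>x\<in>\<Sigma>. \<delta> q x \<in> Q"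
    "L = dfa_lang \<Sigma> \<delta> q0 F" using regular_dfa[OF assms(1)] by blast
  define \<delta>' where "\<delta>' = (\<lambda>(q, b::bool) x. (\<delta> q x, q \<in> F \<and> x \<in> T))"
  define f where "f w = fold (\<lambda>x q. \<delta> q x) w q0" for w
  have key: "fold (\<lambda>x q. \<delta>' q x) w (q0, False) = (f w, w \<noteq> [] \<and> last w \<in> T \<and> f (butlast w) \<in> F)" for w
  proof (induction w rule: rev_induct)
    case Nil then show ?case by (simp add: f_def)
  next
    case (snoc x w)
    have "f (w @ [x]) = \<delta> (f w) x" by (simp add: f_def)
    then show ?case using snoc by (auto simp: \<delta>'_def)
  qed
  have "regular_on \<Sigma> (dfa_lang \<Sigma> \<delta>' (q0, False) {p. snd p})"
    by (rule dfa_regular[where Q = "Q \<times> UNIV"]) (use assms D in \<open>auto simp: \<delta>'_def\<close>)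
  moreover have "dfa_lang \<Sigma> \<delta>' (q0, False) {p. snd p} = {u @ [t] | u t. u \<in> L \<and> t \<in> T}"
  proof (intro equalityI subsetI)
    fix w assume "w \<in> dfa_lang \<Sigma> \<delta>' (q0, False) {p. snd p}"
    then have w: "w \<in> lists \<Sigma>" "w \<noteq> []" "last w \<in> T" "f (butlast w) \<in> F"
      by (auto simp: dfa_lang_def key)
    have "w = butlast w @ [last w]" using w(2) by simp
    moreover have "butlast w \<in> L" using w(1,4) D(5) by (auto simp: dfa_lang_def f_def dest: in_set_butlastD)
    ultimately show "w \<in> {u @ [t] | u t. u \<in> L \<and> t \<in> T}" using w(3) by blast
  next
    fix w assume "w \<in> {u @ [t] | u t. u \<in> L \<and> t \<in> T}"
    then obtain u t where ut: "w = u @ [t]" "u \<in> L" "t \<in> T" by blast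
    then have "u \<in> lists \<Sigma>" "f u \<in> F" using D(5) by (auto simp: dfa_lang_def f_def)
    then show "w \<in> dfa_lang \<Sigma> \<delta>' (q0, False) {p. snd p}"
      using ut assms(2) by (auto simp: dfa_lang_def key)
  qed
  ultimately show ?thesis by simp
qed

context group begin

lemma evalw_append:
  assumes "set u \<subseteq> carrier G" "set v \<subseteq> carrier G"
  shows "evalw G (u @ v) = evalw G u \<otimes> evalw G v"
  using assms(1)
proof (induction u)
  case Nil
  have "evalw G v \<in> carrier G" using assms(2) by (induction v) (auto simp: evalw_def)
  then show ?case by (simp add: evalw_def)
next
  case (Cons a u)
  have "evalw G v \<in> carrier G" using assms(2) by (induction v) (auto simp: evalw_def)
  moreover have "evalw G u \<in> carrier G" using Cons.prems by (induction u) (auto simp: evalw_def)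
  ultimately show ?case using Cons by (simp add: evalw_def m_assoc)
qed

lemma evalw_sub:
  assumes "subgroup K G" "set u \<subseteq> K"
  shows "evalw G u \<in> K"
  using assms(2) by (induction u) (auto simp: evalw_def subgroup.one_closed[OF assms(1)] subgroup.m_closed[OF assms(1)])

lemma evalw_single: "a \<in> carrier G \<Longrightarrow> evalw G [a] = a"
  by (simp add: evalw_def)

lemma evalw_upd: "evalw (G\<lparr>carrier := K\<rparr>) u = evalw G u"
  by (simp add: evalw_def)

lemma symgens_upd:
  assumes "subgroup K G" "B \<subseteq> K"
  shows "symgens (G\<lparr>carrier := K\<rparr>) B = symgens G B"
proof -
  have h: "inv\<^bsub>G\<lparr>carrier := K\<rparr>\<^esub> a = inv a" if "a \<in> B" for a
    using assms that by (simp add: subsetD)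
  have eq: "(\<lambda>a. inv\<^bsub>G\<lparr>carrier := K\<rparr>\<^esub> a) ` B = (\<lambda>a. inv a) ` B"
    by (rule image_cong) (simp_all add: h)
  show ?thesis by (simp add: symgens_def eq)
qed

lemma symgens_sub:
  assumes "subgroup K G" "B \<subseteq> K"
  shows "symgens G B \<subseteq> K"
  using assms by (auto simp: symgens_def subgroup.m_inv_closed)

lemma word_length_le:
  assumes "w \<in> lists (symgens G A)" "evalw G w = g"
  shows "word_length G A g \<le> length w"
  unfolding word_length_def by (rule Least_le) (use assms in blast)

lemma word_length_ex:
  assumes "w \<in> lists (symgens G A)" "evalw G w = g"
  shows "\<exists>w. w \<in> lists (symgens G A) \<and> length w = word_length G A g \<and> evalw G w = g"
proof -
  have "\<exists>n. \<exists>w \<in> lists (symgens G A). length w = n \<and> evalw G w = g" using assms by blast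
  from LeastI_ex[OF this] show ?thesis unfolding word_length_def by blast
qed

lemma generate_words:
  assumes "B \<subseteq> carrier G" "h \<in> generate G B"
  shows "\<exists>w. w \<in> lists (symgens G B) \<and> evalw G w = h"
  using assms(2)
proof (induction rule: generate.induct)
  case one then show ?case by (intro exI[of _ "[]"]) (simp add: evalw_def)
next
  case (incl h) then show ?case using assms(1) by (intro exI[of _ "[h]"]) (auto simp: evalw_def symgens_def)
next
  case (inv h) then show ?case using assms(1) by (intro exI[of _ "[inv h]"]) (auto simp: evalw_def symgens_def)
next
  case (eng h1 h2)
  then obtain w1 w2 where "w1 \<in> lists (symgens G B)" "evalw G w1 = h1" "w2 \<in> lists (symgens G B)" "evalw G w2 = h2"
    by blast
  moreover have "symgens G B \<subseteq> carrier G" using assms(1) by (auto simp: symgens_def)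
  ultimately have "set w1 \<subseteq> carrier G" "set w2 \<subseteq> carrier G" "w1 @ w2 \<in> lists (symgens G B)"
    "evalw G w1 = h1" "evalw G w2 = h2" by auto
  then show ?case by (intro exI[of _ "w1 @ w2"]) (simp add: evalw_append)
qed

end

lemma rep_fun_nonneg: "0 \<le> rep_fun G A L \<psi> n"
  by (simp add: rep_fun_def)

lemma (in group) main_aux:
  fixes H :: "'a set" and f :: "nat \<Rightarrow> real"
  assumes "fin_gen G" and "subgroup H G"
    and "finite (rcosets H)"
    and "in_B (G\<lparr>carrier := H\<rparr>) f"
  shows "in_B G f"
proof -
  have sH: "subgroup H G" by (rule assms(2))
  have HG: "H \<subseteq> carrier G" using subgroup.subset[OF sH] .
  let ?Hs = "G\<lparr>carrier := H\<rparr>"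
  obtain B LH \<psi>H where B: "finite B" "B \<subseteq> H" "generate ?Hs B = H"
    and cH: "cayley_aut_rep ?Hs B LH \<psi>H" and fpH: "fprec (rep_fun ?Hs B LH \<psi>H) f"
    using assms(4) unfolding in_B_def by auto
  obtain A0 where A0: "finite A0" "A0 \<subseteq> carrier G" "generate G A0 = carrier G"
    using assms(1) unfolding fin_gen_def by blast
  define SB where "SB = symgens G B"
  have SBeq: "symgens ?Hs B = SB" unfolding SB_def by (rule symgens_upd[OF sH B(2)])
  have SBH: "SB \<subseteq> H" unfolding SB_def by (rule symgens_sub[OF sH B(2)])
  have regLH: "regular_on SB LH" and bijH: "bij_betw \<psi>H LH H"
    and relH: "\<And>b. b \<in> B \<Longrightarrow> FA_recognizable SB {(u, v). u \<in> LH \<and> v \<in> LH \<and> \<psi>H v = \<psi>H u \<otimes> b}"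
    using cH unfolding cayley_aut_rep_def SBeq by auto
  have LHl: "LH \<subseteq> lists SB" using regular_subset[OF regLH] .
  have finSB: "finite SB" using regular_finite[OF regLH] .
  have psiH: "\<psi>H u \<in> H" if "u \<in> LH" for u using bijH that by (auto simp: bij_betw_def)
  define MH where "MH h = {(u, v). u \<in> LH \<and> v \<in> LH \<and> \<psi>H v = \<psi>H u \<otimes> h}" for h
  have MH: "FA_recognizable SB (MH h)" if "h \<in> H" for h
  proof -
    have "h \<in> generate ?Hs B" using that B(3) by simp
    then show ?thesis
    proof (induction rule: generate.induct)
      case one
      have "MH \<one> = {(u, u) | u. u \<in> LH}"
      proof (intro equalityI subsetI)
        fix p assume "p \<in> MH \<one>"
        then obtain u v where p: "p = (u, v)" "u \<in> LH" "v \<in> LH" "\<psi>H v = \<psi>H u \<otimes> \<one>"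
          unfolding MH_def by blast
        have "\<psi>H u \<in> carrier G" using psiH[OF p(2)] HG by blast
        then have "\<psi>H v = \<psi>H u" using p(4) by simp
        then have "v = u" using bijH p(2,3) unfolding bij_betw_def by (metis inj_onD)
        then show "p \<in> {(u, u) | u. u \<in> LH}" using p by blast
      next
        fix p assume "p \<in> {(u, u) | u. u \<in> LH}"
        then obtain u where p: "p = (u, u)" "u \<in> LH" by blast
        have "\<psi>H u \<in> carrier G" using psiH[OF p(2)] HG by blast
        then show "p \<in> MH \<one>" using p unfolding MH_def by simp
      qed
      then show ?case using FA_diag[OF regLH] by simp
    next
      case (incl h)
      then show ?case using relH unfolding MH_def by simp
    next
      case (inv h)
      have hH: "h \<in> H" using inv B(2) by auto
      have "MH (inv h) = (MH h)\<inverse>"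
      proof (intro equalityI subsetI)
        fix p assume "p \<in> MH (inv h)"
        then obtain u v where p: "p = (u, v)" "u \<in> LH" "v \<in> LH" "\<psi>H v = \<psi>H u \<otimes> inv h"
          by (auto simp: MH_def)
        have c: "\<psi>H u \<in> carrier G" "\<psi>H v \<in> carrier G" "h \<in> carrier G"
          using psiH[OF p(2)] psiH[OF p(3)] hH HG by auto
        then have "\<psi>H u = \<psi>H v \<otimes> h" using p(4) by (simp add: m_assoc)
        then show "p \<in> (MH h)\<inverse>" using p by (auto simp: MH_def)
      next
        fix p assume "p \<in> (MH h)\<inverse>"
        then obtain u v where p: "p = (u, v)" "u \<in> LH" "v \<in> LH" "\<psi>H u = \<psi>H v \<otimes> h"
          by (auto simp: MH_def)
        have c: "\<psi>H u \<in> carrier G" "\<psi>H v \<in> carrier G" "h \<in> carrier G"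
          using psiH[OF p(2)] psiH[OF p(3)] hH HG by auto
        then have "\<psi>H v = \<psi>H u \<otimes> inv h" using p(4) by (simp add: m_assoc)
        then show "p \<in> MH (inv h)" using p by (auto simp: MH_def)
      qed
      moreover have "inv\<^bsub>?Hs\<^esub> h = inv h" using hH sH by simp
      ultimately show ?case using FA_converse[OF relH[OF inv.hyps]] unfolding MH_def by simp
    next
      case (eng h1 h2)
      have h12: "h1 \<in> H" "h2 \<in> H" using eng.hyps B(3) by auto
      have "MH (h1 \<otimes> h2) = MH h1 O MH h2"
      proof (intro equalityI subsetI)
        fix p assume "p \<in> MH (h1 \<otimes> h2)"
        then obtain u w where p: "p = (u, w)" "u \<in> LH" "w \<in> LH" "\<psi>H w = \<psi>H u \<otimes> (h1 \<otimes> h2)"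
          by (auto simp: MH_def)
        have "\<psi>H u \<otimes> h1 \<in> H" using psiH[OF p(2)] h12 sH by (simp add: subgroup.m_closed)
        then obtain v where v: "v \<in> LH" "\<psi>H v = \<psi>H u \<otimes> h1"
          using bijH by (metis bij_betw_def imageE)
        have "\<psi>H w = \<psi>H v \<otimes> h2" using p(4) v(2) psiH[OF p(2)] h12 HG by (simp add: m_assoc subsetD)
        then show "p \<in> MH h1 O MH h2" using p v by (auto simp: MH_def)
      next
        fix p assume "p \<in> MH h1 O MH h2"
        then obtain u v w where p: "p = (u, w)" "u \<in> LH" "v \<in> LH" "w \<in> LH" "\<psi>H v = \<psi>H u \<otimes> h1"
          "\<psi>H w = \<psi>H v \<otimes> h2" by (auto simp: MH_def)
        then have "\<psi>H w = \<psi>H u \<otimes> (h1 \<otimes> h2)" using psiH[OF p(2)] h12 HG by (simp add: m_assoc subsetD)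
        then show "p \<in> MH (h1 \<otimes> h2)" using p by (auto simp: MH_def)
      qed
      then show ?case using FA_comp[OF eng.IH] by simp
    qed
  qed
  have Hgrp: "group ?Hs" by (rule subgroup_imp_group[OF sH])
  define rep where "rep C = (if C = H then \<one> else (SOME g. g \<in> C))" for C
  have rep: "rep C \<in> C \<and> rep C \<in> carrier G \<and> H #> rep C = C" if "C \<in> rcosets H" for C
  proof -
    have "C \<in> (\<Union>a\<in>carrier G. {H #> a})" using that by (simp add: RCOSETS_def)
    then obtain a where a: "a \<in> carrier G" "C = H #> a" by (auto simp only: UN_iff singleton_iff)
    have aC: "a \<in> C" using a rcos_self[OF a(1) sH] by simp
    have r: "rep C \<in> C"
    proof (cases "C = H")
      case True then show ?thesis using subgroup.one_closed[OF sH] by (simp add: rep_def)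
    next
      case False then show ?thesis by (simp add: rep_def) (rule someI[of "\<lambda>g. g \<in> C", OF aC])
    qed
    have rc: "rep C \<in> carrier G" using subgroup.elemrcos_carrier[OF sH is_group a(1)] r a(2) by blast
    have "H #> a = H #> rep C" using repr_independence[of "rep C" H a] r a sH by simp
    then show ?thesis using r rc a(2) by simp
  qed
  define T where "T = rep ` (rcosets H)"
  define tau where "tau g = rep (H #> g)" for g
  have finT: "finite T" using assms(3) by (simp add: T_def)
  have TG: "T \<subseteq> carrier G" using rep by (auto simp: T_def)
  have tau: "tau g \<in> T \<and> tau g \<in> carrier G \<and> H #> tau g = H #> g \<and> g \<otimes> inv (tau g) \<in> H"
    if "g \<in> carrier G" for g
  proof -
    have C: "H #> g \<in> rcosets H" using rcosetsI[OF HG that] .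
    have r: "tau g \<in> carrier G" "H #> tau g = H #> g" using rep[OF C] by (simp_all add: tau_def)
    have "g \<in> H #> tau g" using r(2) rcos_self[OF that sH] by simp
    then have "g \<otimes> inv (tau g) \<in> H" using subgroup.rcos_module_imp[OF sH is_group r(1)] by blast
    then show ?thesis using r C by (simp add: T_def tau_def)
  qed
  have tauT: "tau t = t" if "t \<in> T" for t
  proof -
    from that obtain C where C: "t = rep C" "C \<in> rcosets H" unfolding T_def by (rule imageE)
    then show ?thesis using rep[OF C(2)] by (simp add: tau_def)
  qed
  have tau_mult: "tau (h \<otimes> g) = tau g" if "h \<in> H" "g \<in> carrier G" for h g
  proof -
    have "h \<otimes> g \<in> H #> g" using rcosI[OF that(1) HG that(2)] .
    then have "H #> g = H #> (h \<otimes> g)" using repr_independence[OF _ that(2) sH] by blast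
    then show ?thesis by (simp add: tau_def)
  qed
  define A where "A = A0 \<union> B \<union> T"
  define SA where "SA = symgens G A"
  have finA: "finite A" using A0(1) B(1) finT by (simp add: A_def)
  have AG: "A \<subseteq> carrier G" using A0(2) B(2) HG TG by (auto simp: A_def)
  have genA: "generate G A = carrier G"
  proof
    show "generate G A \<subseteq> carrier G" using generate_incl[OF AG] .
    show "carrier G \<subseteq> generate G A" using A0(3) mono_generate[of A0 A] by (auto simp: A_def)
  qed
  have finSA: "finite SA" using finA by (simp add: SA_def symgens_def)
  have SBSA: "SB \<subseteq> SA" by (auto simp: SA_def SB_def symgens_def A_def)
  have TSA: "T \<subseteq> SA" by (auto simp: SA_def symgens_def A_def)
  have invTSA: "inv t \<in> SA" if "t \<in> T" for t using that by (auto simp: SA_def symgens_def A_def)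
  have SAG: "SA \<subseteq> carrier G" using AG by (auto simp: SA_def symgens_def)
  define LG where "LG = {u @ [t] | u t. u \<in> LH \<and> t \<in> T}"
  define \<psi>G where "\<psi>G w = \<psi>H (butlast w) \<otimes> last w" for w
  have psiG: "\<psi>G (u @ [t]) = \<psi>H u \<otimes> t" for u t by (simp add: \<psi>G_def)
  have regLG: "regular_on SA LG" unfolding LG_def
    by (rule regular_snoc_set[OF regular_enlarge[OF regLH SBSA finSA] TSA])
  have psiHG: "\<psi>H u \<in> carrier G" if "u \<in> LH" for u using psiH[OF that] HG by blast
  have bijG: "bij_betw \<psi>G LG (carrier G)"
    unfolding bij_betw_def
  proof (intro conjI)
    show "inj_on \<psi>G LG"
    proof (rule inj_onI)
      fix w w' assume w: "w \<in> LG" "w' \<in> LG" "\<psi>G w = \<psi>G w'"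
      obtain u t where ut: "w = u @ [t]" "u \<in> LH" "t \<in> T" using w(1) by (auto simp: LG_def)
      obtain u' t' where ut': "w' = u' @ [t']" "u' \<in> LH" "t' \<in> T" using w(2) by (auto simp: LG_def)
      have eq: "\<psi>H u \<otimes> t = \<psi>H u' \<otimes> t'" using w(3) ut ut' by (simp add: psiG)
      have "t = tau (\<psi>H u \<otimes> t)" using tau_mult[OF psiH[OF ut(2)]] tauT[OF ut(3)] TG ut(3) by auto
      also have "\<dots> = tau (\<psi>H u' \<otimes> t')" by (simp add: eq)
      also have "\<dots> = t'" using tau_mult[OF psiH[OF ut'(2)]] tauT[OF ut'(3)] TG ut'(3) by auto
      finally have tt: "t = t'" .
      then have "\<psi>H u = \<psi>H u'" using eq psiHG[OF ut(2)] psiHG[OF ut'(2)] TG ut(3) by auto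
      then have "u = u'" using bijH ut(2) ut'(2) unfolding bij_betw_def by (metis inj_onD)
      then show "w = w'" using ut ut' tt by simp
    qed
    show "\<psi>G ` LG = carrier G"
    proof (intro equalityI subsetI)
      fix g assume "g \<in> \<psi>G ` LG"
      then obtain u t where "g = \<psi>H u \<otimes> t" "u \<in> LH" "t \<in> T" by (auto simp: LG_def psiG)
      then show "g \<in> carrier G" using psiHG TG by auto
    next
      fix g assume g: "g \<in> carrier G"
      have tg: "tau g \<in> T" "tau g \<in> carrier G" "g \<otimes> inv (tau g) \<in> H" using tau[OF g] by auto
      then obtain u where u: "u \<in> LH" "\<psi>H u = g \<otimes> inv (tau g)"
        using bijH by (metis bij_betw_def imageE)
      have "\<psi>G (u @ [tau g]) = g" using u g tg(2) by (simp add: psiG m_assoc)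
      moreover have "u @ [tau g] \<in> LG" using u tg by (auto simp: LG_def)
      ultimately show "g \<in> \<psi>G ` LG" by (metis image_eqI)
    qed
  qed
  have relG: "FA_recognizable SA {(w, w'). w \<in> LG \<and> w' \<in> LG \<and> \<psi>G w' = \<psi>G w \<otimes> a}" if aA: "a \<in> A" for a
  proof -
    have aG: "a \<in> carrier G" using aA AG by blast
    define hh where "hh t = t \<otimes> a \<otimes> inv (tau (t \<otimes> a))" for t
    have hhH: "hh t \<in> H" if "t \<in> T" for t
      using tau[of "t \<otimes> a"] that TG aG by (auto simp: hh_def)
    let ?RU = "\<Union>t\<in>T. {(u @ [t], v @ [tau (t \<otimes> a)]) | u v. (u, v) \<in> MH (hh t)}"
    have FU: "FA_recognizable SA ?RU"
    proof (rule FA_UN[OF finT finSA])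
      fix t assume t: "t \<in> T"
      have "tau (t \<otimes> a) \<in> T" using tau[of "t \<otimes> a"] t TG aG by auto
      then show "FA_recognizable SA {(u @ [t], v @ [tau (t \<otimes> a)]) | u v. (u, v) \<in> MH (hh t)}"
        using FA_append[OF FA_enlarge[OF MH[OF hhH[OF t]] SBSA finSA]] t TSA by blast
    qed
    have "{(w, w'). w \<in> LG \<and> w' \<in> LG \<and> \<psi>G w' = \<psi>G w \<otimes> a} = ?RU"
    proof (intro equalityI subsetI)
      fix p assume "p \<in> {(w, w'). w \<in> LG \<and> w' \<in> LG \<and> \<psi>G w' = \<psi>G w \<otimes> a}"
      then obtain w w' where p: "p = (w, w')" "w \<in> LG" "w' \<in> LG" "\<psi>G w' = \<psi>G w \<otimes> a" by blast
      obtain u t where ut: "w = u @ [t]" "u \<in> LH" "t \<in> T" using p(2) by (auto simp: LG_def)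
      obtain v t' where vt: "w' = v @ [t']" "v \<in> LH" "t' \<in> T" using p(3) by (auto simp: LG_def)
      have c: "\<psi>H u \<in> carrier G" "\<psi>H v \<in> carrier G" "t \<in> carrier G" "t' \<in> carrier G"
        using psiHG ut vt TG by auto
      have eq: "\<psi>H v \<otimes> t' = \<psi>H u \<otimes> (t \<otimes> a)" using p(4) ut vt c aG by (simp add: psiG m_assoc)
      have "t' = tau (\<psi>H v \<otimes> t')" using tau_mult[OF psiH[OF vt(2)] c(4)] tauT[OF vt(3)] by simp
      also have "\<dots> = tau (\<psi>H u \<otimes> (t \<otimes> a))" by (simp add: eq)
      also have "\<dots> = tau (t \<otimes> a)" using tau_mult[OF psiH[OF ut(2)]] c aG by simp
      finally have tt: "t' = tau (t \<otimes> a)" .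
      have "\<psi>H v = \<psi>H u \<otimes> (t \<otimes> a) \<otimes> inv t'"
        using eq c aG by (simp add: inv_solve_right)
      then have "\<psi>H v = \<psi>H u \<otimes> hh t" using c aG tt by (simp add: hh_def m_assoc)
      then have "(u, v) \<in> MH (hh t)" using ut vt by (simp add: MH_def)
      then show "p \<in> ?RU" using p(1) ut vt tt by blast
    next
      fix p assume "p \<in> ?RU"
      then obtain t u v where p: "t \<in> T" "p = (u @ [t], v @ [tau (t \<otimes> a)])" "(u, v) \<in> MH (hh t)" by blast
      have uv: "u \<in> LH" "v \<in> LH" "\<psi>H v = \<psi>H u \<otimes> hh t" using p(3) by (auto simp: MH_def)
      have tG: "t \<in> carrier G" using p(1) TG by blast
      have tt: "tau (t \<otimes> a) \<in> T" "tau (t \<otimes> a) \<in> carrier G" using tau[of "t \<otimes> a"] tG aG by auto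
      have "\<psi>G (v @ [tau (t \<otimes> a)]) = \<psi>H u \<otimes> (t \<otimes> a \<otimes> inv (tau (t \<otimes> a))) \<otimes> tau (t \<otimes> a)"
        using uv by (simp add: psiG hh_def)
      also have "\<dots> = \<psi>H u \<otimes> t \<otimes> a" using psiHG[OF uv(1)] tG aG tt(2) by (simp add: m_assoc)
      also have "\<dots> = \<psi>G (u @ [t]) \<otimes> a" by (simp add: psiG)
      finally have "\<psi>G (v @ [tau (t \<otimes> a)]) = \<psi>G (u @ [t]) \<otimes> a" .
      moreover have "u @ [t] \<in> LG" "v @ [tau (t \<otimes> a)] \<in> LG" using uv p(1) tt by (auto simp: LG_def)
      ultimately show "p \<in> {(w, w'). w \<in> LG \<and> w' \<in> LG \<and> \<psi>G w' = \<psi>G w \<otimes> a}" using p(2) by simp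
    qed
    then show ?thesis using FU by simp
  qed
  have cG: "cayley_aut_rep G A LG \<psi>G"
    unfolding cayley_aut_rep_def SA_def[symmetric] using regLG bijG relG by blast
  have conj_bound: "word_length G A (inv t \<otimes> z \<otimes> t) \<le> 3 * word_length ?Hs B z" if z: "z \<in> H" and t: "t \<in> T" for z t
  proof -
    have tG: "t \<in> carrier G" using t TG by blast
    have zG: "z \<in> carrier G" using z HG by blast
    have "z \<in> generate ?Hs B" using z B(3) by simp
    then obtain w where "w \<in> lists (symgens ?Hs B)" "evalw ?Hs w = z"
      using group.generate_words[OF Hgrp, of B z] B(2) by auto
    then obtain w0 where w0: "w0 \<in> lists SB" "length w0 = word_length ?Hs B z" "evalw G w0 = z"
      using group.word_length_ex[OF Hgrp] SBeq by (metis evalw_upd)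
    show ?thesis
    proof (cases "w0 = []")
      case True
      then have "z = \<one>" using w0(3) by (simp add: evalw_def)
      then have "inv t \<otimes> z \<otimes> t = \<one>" using tG by simp
      moreover have "word_length G A \<one> \<le> length ([] :: 'a list)"
        by (rule word_length_le) (simp_all add: evalw_def)
      ultimately show ?thesis by simp
    next
      case False
      have w0G: "set w0 \<subseteq> carrier G" using w0(1) SBH HG by auto
      have e1: "evalw G (w0 @ [t]) = z \<otimes> t"
        using w0G tG w0(3) by (simp add: evalw_append evalw_single)
      have "evalw G ([inv t] @ w0 @ [t]) = inv t \<otimes> evalw G (w0 @ [t])"
        by (simp add: evalw_def)
      then have "evalw G ([inv t] @ w0 @ [t]) = inv t \<otimes> (z \<otimes> t)" using e1 by simp
      also have "\<dots> = inv t \<otimes> z \<otimes> t" using tG zG by (simp add: m_assoc)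
      finally have ev: "evalw G ([inv t] @ w0 @ [t]) = inv t \<otimes> z \<otimes> t" .
      have "[inv t] @ w0 @ [t] \<in> lists SA" using w0(1) SBSA invTSA[OF t] TSA t by auto
      then have "word_length G A (inv t \<otimes> z \<otimes> t) \<le> length ([inv t] @ w0 @ [t])"
        using word_length_le[of _ A] ev unfolding SA_def by blast
      also have "\<dots> = word_length ?Hs B z + 2" using w0(2) by simp
      also have "\<dots> \<le> 3 * word_length ?Hs B z" using False w0(2) by (cases w0) auto
      finally show ?thesis .
    qed
  qed
  define dG where "dG w = word_dist G A (evalw G w) (\<psi>G w)" for w
  define dH where "dH u = word_dist ?Hs B (evalw ?Hs u) (\<psi>H u)" for u
  have dbound: "dG (u @ [t]) \<le> 3 * dH u" if u: "u \<in> LH" and t: "t \<in> T" for u t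
  proof -
    have uH: "set u \<subseteq> H" using u LHl SBH by auto
    have piH: "evalw G u \<in> H" using evalw_sub[OF sH uH] .
    have c: "evalw G u \<in> carrier G" "\<psi>H u \<in> carrier G" "t \<in> carrier G" using piH HG psiHG[OF u] t TG by auto
    define z where "z = inv (evalw G u) \<otimes> \<psi>H u"
    have zH: "z \<in> H" unfolding z_def using piH psiH[OF u] sH by (simp add: subgroup.m_closed subgroup.m_inv_closed)
    have "dH u = word_length ?Hs B z"
      unfolding dH_def word_dist_def z_def using piH sH by (simp add: evalw_upd)
    moreover have "dG (u @ [t]) = word_length G A (inv t \<otimes> z \<otimes> t)"
    proof -
      have "evalw G (u @ [t]) = evalw G u \<otimes> t" using uH HG c by (simp add: evalw_append evalw_single)
      then have "inv (evalw G (u @ [t])) \<otimes> \<psi>G (u @ [t]) = inv t \<otimes> inv (evalw G u) \<otimes> (\<psi>H u \<otimes> t)"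
        using c by (simp add: psiG inv_mult_group)
      also have "\<dots> = inv t \<otimes> z \<otimes> t" unfolding z_def using c by (simp add: m_assoc)
      finally show ?thesis by (simp add: dG_def word_dist_def)
    qed
    ultimately show ?thesis using conj_bound[OF zH t] by simp
  qed
  have LGl: "LG \<subseteq> lists SA" using regular_subset[OF regLG] .
  have finlen: "finite {w \<in> L. length w \<le> n}" if "L \<subseteq> lists S" "finite S" for L S n
  proof (rule finite_subset[OF _ finite_lists_length_le[OF that(2), of n]])
    show "{w \<in> L. length w \<le> n} \<subseteq> {xs. set xs \<subseteq> S \<and> length xs \<le> n}" using that(1) by auto
  qed
  have rep_le: "rep_fun G A LG \<psi>G n \<le> 3 * rep_fun ?Hs B LH \<psi>H n" for n
  proof (cases "{w \<in> LG. length w \<le> n} = {}")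
    case True
    then show ?thesis using rep_fun_nonneg[of ?Hs B LH \<psi>H n] by (simp add: rep_fun_def)
  next
    case False
    have fG: "finite {w \<in> LG. length w \<le> n}" using finlen[OF LGl finSA] .
    have fH: "finite {u \<in> LH. length u \<le> n}" using finlen[OF LHl finSB] .
    have "Max (dG ` {w \<in> LG. length w \<le> n}) \<in> dG ` {w \<in> LG. length w \<le> n}"
      using fG False by (intro Max_in) auto
    then obtain w where w: "w \<in> LG" "length w \<le> n" "Max (dG ` {w \<in> LG. length w \<le> n}) = dG w" by auto
    obtain u t where ut: "w = u @ [t]" "u \<in> LH" "t \<in> T" using w(1) by (auto simp: LG_def)
    have uin: "u \<in> {u \<in> LH. length u \<le> n}" using ut w(2) by auto
    have "dH u \<le> Max (dH ` {u \<in> LH. length u \<le> n})" using fH uin by (intro Max_ge) auto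
    moreover have "dG w \<le> 3 * dH u" using dbound[OF ut(2,3)] ut(1) by simp
    ultimately have "dG w \<le> 3 * Max (dH ` {u \<in> LH. length u \<le> n})" by linarith
    then have "real (dG w) \<le> real (3 * Max (dH ` {u \<in> LH. length u \<le> n}))" by (simp only: of_nat_le_iff)
    then have "real (dG w) \<le> 3 * real (Max (dH ` {u \<in> LH. length u \<le> n}))" by simp
    moreover have "rep_fun G A LG \<psi>G n = real (Max (dG ` {w \<in> LG. length w \<le> n}))"
      unfolding rep_fun_def dG_def[abs_def] using False by (simp only: if_False)
    moreover have neH: "\<not> ({u \<in> LH. length u \<le> n} = {})" using uin by blast
    moreover have "rep_fun ?Hs B LH \<psi>H n = real (Max (dH ` {u \<in> LH. length u \<le> n}))"
      unfolding rep_fun_def dH_def[abs_def] using neH by (simp only: if_False)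
    ultimately show ?thesis using w(3) by simp
  qed
  have fpG: "fprec (rep_fun G A LG \<psi>G) f"
  proof -
    obtain N K M where NKM: "0 < K" "0 < M" "\<forall>n\<ge>N. rep_fun ?Hs B LH \<psi>H n \<le> real K * f (M * n)"
      using fpH unfolding fprec_def by blast
    have "\<forall>n\<ge>N. rep_fun G A LG \<psi>G n \<le> real (3 * K) * f (M * n)"
    proof (intro allI impI)
      fix n assume "N \<le> n"
      then have "rep_fun ?Hs B LH \<psi>H n \<le> real K * f (M * n)" using NKM(3) by blast
      then show "rep_fun G A LG \<psi>G n \<le> real (3 * K) * f (M * n)" using rep_le[of n] by simp
    qed
    then show ?thesis unfolding fprec_def using NKM(1,2) by (intro exI[of _ N] exI[of _ "3 * K"] exI[of _ M]) simp
  qed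
  show ?thesis unfolding in_B_def using finA AG genA cG fpG by blast
qed

theorem mainTheorem4:
  fixes G :: "('a, 'b) monoid_scheme" and H :: "'a set" and f :: "nat \<Rightarrow> real"
  assumes "group G" and "fin_gen G" and "subgroup H G"
    and "finite (rcosets\<^bsub>G\<^esub> H)"
    and "in_frakF f"
    and "in_B (G\<lparr>carrier := H\<rparr>) f"
  shows "in_B G f"
  using group.main_aux[OF assms(1,2,3,4,6)] .

end
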